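(* Let $X$ be a finite set with $|X|\ge 4$ and let $\tau$ be a non-empty thin subset of $\binom{X}{3}$. Then there exists an unrooted caterpillar tree $T$ with leaf set $X$ for which the map ${\rm med}_T:\tau\to \mathring{V}(T)$, $s\mapsto{\rm med}_T(s)$, is one-to-one.
   Context: $L(\tau)=\bigcup_{s\in\tau}s$; $\tau\subseteq\binom{X}{3}$ is thin if $|L(\tau')|\ge|\tau'|+2$ for every non-empty $\tau'\subseteq\tau$. An unrooted phylogenetic $X$-tree is a tree whose leaves (degree-1 vertices) are bijectively labelled by $X$ and whose non-leaf vertices are unlabelled of degree at least 3; it is binary if all non-leaf vertices have degree 3. $\mathring{V}(T)$ denotes the set of interior (non-leaf) vertices. A cherry is a pair of leaves adjacent to a common vertex. An unrooted caterpillar tree on $X$ is an unrooted binary phylogenetic $X$-tree with at most 2 cherries. For $s=\{x,y,z\}$, ${\rm med}_T(s)$ is the unique vertex of $T$ lying on all three paths between pairs of $x,y,z$. *)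

theory Defs
  imports Main
begin

definition walk :: "('v \<times> 'v) set \<Rightarrow> 'v list \<Rightarrow> bool" where
  "walk E p \<longleftrightarrow> p \<noteq> [] \<and> (\<forall>i < length p - 1. (p ! i, p ! Suc i) \<in> E)"

definition gpath :: "('v \<times> 'v) set \<Rightarrow> 'v \<Rightarrow> 'v \<Rightarrow> 'v list \<Rightarrow> bool" where
  "gpath E u v p \<longleftrightarrow> walk E p \<and> distinct p \<and> hd p = u \<and> last p = v"

definition has_cycle :: "('v \<times> 'v) set \<Rightarrow> bool" where
  "has_cycle E \<longleftrightarrow> (\<exists>p. walk E p \<and> distinct p \<and> length p \<ge> 3 \<and> (last p, hd p) \<in> E)"

definition is_tree :: "'v set \<Rightarrow> ('v \<times> 'v) set \<Rightarrow> bool" where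
  "is_tree V E \<longleftrightarrow> finite V \<and> V \<noteq> {} \<and> E \<subseteq> V \<times> V \<and> sym E \<and> (\<forall>v. (v, v) \<notin> E)
     \<and> (\<forall>u\<in>V. \<forall>v\<in>V. \<exists>p. gpath E u v p) \<and> \<not> has_cycle E"

definition degree :: "('v \<times> 'v) set \<Rightarrow> 'v \<Rightarrow> nat" where
  "degree E v = card {u. (v, u) \<in> E}"

definition leaves :: "'v set \<Rightarrow> ('v \<times> 'v) set \<Rightarrow> 'v set" where
  "leaves V E = {v \<in> V. degree E v = 1}"

definition interior_vertices :: "'v set \<Rightarrow> ('v \<times> 'v) set \<Rightarrow> 'v set" where
  "interior_vertices V E = V - leaves V E"

definition phylo_tree :: "'a set \<Rightarrow> 'v set \<Rightarrow> ('v \<times> 'v) set \<Rightarrow> ('a \<Rightarrow> 'v) \<Rightarrow> bool" where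
  "phylo_tree X V E phi \<longleftrightarrow> is_tree V E \<and> bij_betw phi X (leaves V E)
     \<and> (\<forall>v \<in> interior_vertices V E. degree E v \<ge> 3)"

definition binary_phylo_tree :: "'a set \<Rightarrow> 'v set \<Rightarrow> ('v \<times> 'v) set \<Rightarrow> ('a \<Rightarrow> 'v) \<Rightarrow> bool" where
  "binary_phylo_tree X V E phi \<longleftrightarrow> phylo_tree X V E phi
     \<and> (\<forall>v \<in> interior_vertices V E. degree E v = 3)"

definition cherries :: "'v set \<Rightarrow> ('v \<times> 'v) set \<Rightarrow> 'v set set" where
  "cherries V E = {{a, b} | a b. a \<in> leaves V E \<and> b \<in> leaves V E \<and> a \<noteq> b
                     \<and> (\<exists>w. (a, w) \<in> E \<and> (b, w) \<in> E)}"

definition caterpillar :: "'a set \<Rightarrow> 'v set \<Rightarrow> ('v \<times> 'v) set \<Rightarrow> ('a \<Rightarrow> 'v) \<Rightarrow> bool" where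
  "caterpillar X V E phi \<longleftrightarrow> binary_phylo_tree X V E phi \<and> card (cherries V E) \<le> 2"

definition on_path :: "('v \<times> 'v) set \<Rightarrow> 'v \<Rightarrow> 'v \<Rightarrow> 'v \<Rightarrow> bool" where
  "on_path E u w v \<longleftrightarrow> (\<exists>p. gpath E u v p \<and> w \<in> set p)"

definition med :: "'v set \<Rightarrow> ('v \<times> 'v) set \<Rightarrow> ('a \<Rightarrow> 'v) \<Rightarrow> 'a set \<Rightarrow> 'v" where
  "med V E phi s = (THE v. v \<in> V \<and> (\<forall>a\<in>s. \<forall>b\<in>s. a \<noteq> b \<longrightarrow> on_path E (phi a) v (phi b)))"

definition thin :: "'a set set \<Rightarrow> bool" where
  "thin \<tau> \<longleftrightarrow> (\<forall>\<tau>'. \<tau>' \<subseteq> \<tau> \<and> \<tau>' \<noteq> {} \<longrightarrow> card (\<Union>\<tau>') \<ge> card \<tau>' + 2)"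

end

theory Submission
  imports Defs
begin

lemma walk_single[simp]: "walk E [x]"
  by (simp add: walk_def)

lemma walk_Nil[simp]: "\<not> walk E []"
  by (simp add: walk_def)

lemma walk_Cons_Cons[simp]: "walk E (x # y # p) \<longleftrightarrow> (x, y) \<in> E \<and> walk E (y # p)"
  unfolding walk_def
  by (auto simp: nth_Cons split: nat.splits)

lemma walk_ConsD: "walk E (x # p) \<Longrightarrow> p \<noteq> [] \<Longrightarrow> walk E p"
  by (cases p) auto

lemma walk_append: "walk E (p @ [z]) \<Longrightarrow> walk E (z # q) \<Longrightarrow> walk E (p @ z # q)"
proof (induction p)
  case Nil then show ?case by simp
next
  case (Cons a p)
  then show ?case by (cases p) auto
qed

lemma walk_appendD1: "walk E (p @ q) \<Longrightarrow> p \<noteq> [] \<Longrightarrow> walk E p"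
proof (induction p)
  case Nil then show ?case by simp
next
  case (Cons a p)
  then show ?case by (cases p; cases q) auto
qed

lemma walk_appendD2: "walk E (p @ q) \<Longrightarrow> q \<noteq> [] \<Longrightarrow> walk E q"
proof (induction p)
  case Nil then show ?case by simp
next
  case (Cons a p)
  then show ?case by (cases p; cases q) auto
qed

lemma walk_rev: "sym E \<Longrightarrow> walk E p \<Longrightarrow> walk E (rev p)"
proof (induction p)
  case Nil then show ?case by simp
next
  case (Cons a p)
  show ?case
  proof (cases p)
    case Nil then show ?thesis by simp
  next
    case (Cons b q)
    with Cons.prems have "(a,b) \<in> E" "walk E p" by auto
    then have "(b,a) \<in> E" using Cons.prems(1) by (meson symD)
    have "walk E (rev p)" using Cons.IH Cons.prems \<open>walk E p\<close> by simp
    then have "walk E (rev q @ [b])" using Cons by simp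
    moreover have "walk E (b # [a])" using \<open>(b,a) \<in> E\<close> by simp
    ultimately have "walk E (rev q @ b # [a])" by (rule walk_append)
    then show ?thesis using Cons by simp
  qed
qed

lemma walk_shorten:
  "walk E p \<Longrightarrow> \<exists>q. walk E q \<and> distinct q \<and> hd q = hd p \<and> last q = last p"
proof (induction "length p" arbitrary: p rule: less_induct)
  case less
  show ?case
  proof (cases "distinct p")
    case True then show ?thesis using less.prems by blast
  next
    case False
    then obtain xs ys zs y where p: "p = xs @ [y] @ ys @ [y] @ zs"
      using not_distinct_decomp by blast
    have w1: "walk E (xs @ [y])" using less.prems p walk_appendD1[of E "xs @ [y]"] by simp
    have w2: "walk E (y # zs)" using less.prems p walk_appendD2[of E "xs @ [y] @ ys" "y # zs"] by simp
    have "walk E (xs @ y # zs)" using w1 w2 by (rule walk_append)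
    moreover have "length (xs @ y # zs) < length p" using p by simp
    ultimately obtain q where "walk E q \<and> distinct q \<and> hd q = hd (xs @ y # zs) \<and> last q = last (xs @ y # zs)"
      using less.hyps by blast
    moreover have "hd (xs @ y # zs) = hd p" using p by (cases xs) auto
    moreover have "last (xs @ y # zs) = last p" using p by (cases zs) auto
    ultimately show ?thesis by metis
  qed
qed

lemma gpath_rev: "sym E \<Longrightarrow> gpath E u v p \<Longrightarrow> gpath E v u (rev p)"
  unfolding gpath_def using walk_rev by (auto simp: hd_rev last_rev)

lemma on_path_sym: "sym E \<Longrightarrow> on_path E u w v \<Longrightarrow> on_path E v w u"
  unfolding on_path_def using gpath_rev by fastforce

lemma walk_cut:
  assumes "walk E p" "hd p \<in> S" "last p \<notin> S"
    and cut: "\<And>x y. (x, y) \<in> E \<Longrightarrow> x \<in> S \<Longrightarrow> y \<notin> S \<Longrightarrow> x = z \<or> y = z"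
  shows "z \<in> set p"
  using assms(1-3)
proof (induction p)
  case Nil then show ?case by simp
next
  case (Cons a p)
  show ?case
  proof (cases p)
    case Nil then show ?thesis using Cons.prems by simp
  next
    case (Cons b q)
    show ?thesis
    proof (cases "b \<in> S")
      case True
      then have "z \<in> set p" using Cons.IH Cons.prems \<open>p = b # q\<close> by simp
      then show ?thesis by simp
    next
      case False
      then have "a = z \<or> b = z" using cut[of a b] Cons.prems \<open>p = b # q\<close> by simp
      then show ?thesis using \<open>p = b # q\<close> by auto
    qed
  qed
qed

lemma walk_closed:
  assumes "walk E p" "hd p \<in> C" "w \<notin> set p"
    and cl: "\<And>u v. (u, v) \<in> E \<Longrightarrow> u \<in> C \<Longrightarrow> v \<noteq> w \<Longrightarrow> v \<in> C"
  shows "set p \<subseteq> C"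
  using assms(1-3)
proof (induction p)
  case Nil then show ?case by simp
next
  case (Cons a p)
  show ?case
  proof (cases p)
    case Nil then show ?thesis using Cons.prems by simp
  next
    case (Cons b q)
    have "b \<in> C" using cl[of a b] Cons.prems \<open>p = b # q\<close> by auto
    then have "set p \<subseteq> C" using Cons.IH Cons.prems \<open>p = b # q\<close> by simp
    then show ?thesis using Cons.prems by simp
  qed
qed

lemma gpath_avoid:
  assumes "sym E" "gpath E x y p" "w \<in> set p" "w \<noteq> x" "w \<noteq> y" "x \<in> C" "y \<in> C"
    and cl: "\<And>u v. (u, v) \<in> E \<Longrightarrow> u \<in> C \<Longrightarrow> v \<noteq> w \<Longrightarrow> v \<in> C"
    and un: "\<And>u v. (w, u) \<in> E \<Longrightarrow> (w, v) \<in> E \<Longrightarrow> u \<in> C \<Longrightarrow> v \<in> C \<Longrightarrow> u = v"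
  shows False
proof -
  have wp: "walk E p" and dp: "distinct p" and hp: "hd p = x" and lp: "last p = y"
    using assms(2) unfolding gpath_def by auto
  obtain xs ys where p: "p = xs @ w # ys" using assms(3) by (meson split_list)
  have "xs \<noteq> []" using p hp assms(4) by auto
  have "ys \<noteq> []" using p lp assms(5) by auto
  have w1: "walk E (xs @ [w])" using wp p walk_appendD1[of E "xs @ [w]" ys] by simp
  have w2: "walk E (w # ys)" using wp p walk_appendD2[of E xs "w # ys"] by simp
  have wxs: "walk E xs" using walk_appendD1[OF w1 \<open>xs \<noteq> []\<close>] .
  have wys: "walk E ys" using walk_ConsD[OF w2 \<open>ys \<noteq> []\<close>] .
  have "w \<notin> set xs" "w \<notin> set ys" using dp p by auto
  have "hd xs = x" using hp p \<open>xs \<noteq> []\<close> by simp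
  have "set xs \<subseteq> C"
    by (rule walk_closed[OF wxs]) (use \<open>hd xs = x\<close> assms(6) \<open>w \<notin> set xs\<close> cl in auto)
  then have lx: "last xs \<in> C" using \<open>xs \<noteq> []\<close> by auto
  have wrys: "walk E (rev ys)" using walk_rev[OF assms(1) wys] .
  have "hd (rev ys) = y" using lp p \<open>ys \<noteq> []\<close> by (simp add: hd_rev)
  have "set (rev ys) \<subseteq> C"
    by (rule walk_closed[OF wrys]) (use \<open>hd (rev ys) = y\<close> assms(7) \<open>w \<notin> set ys\<close> cl in auto)
  then have hy: "hd ys \<in> C" using \<open>ys \<noteq> []\<close> by auto
  have "walk E (butlast xs @ [last xs, w])" using w1 \<open>xs \<noteq> []\<close>
    by (metis append.assoc append_Cons append_Nil append_butlast_last_id)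
  then have "walk E [last xs, w]" using walk_appendD2 by fastforce
  then have "(last xs, w) \<in> E" by simp
  then have e1: "(w, last xs) \<in> E" using assms(1) by (meson symD)
  have e2: "(w, hd ys) \<in> E" using w2 \<open>ys \<noteq> []\<close> by (cases ys) auto
  have "last xs = hd ys" using un[OF e1 e2 lx hy] .
  moreover have "last xs \<noteq> hd ys"
  proof
    assume eq: "last xs = hd ys"
    have "last xs \<in> set xs" using \<open>xs \<noteq> []\<close> by simp
    moreover have "hd ys \<in> set ys" using \<open>ys \<noteq> []\<close> by simp
    ultimately show False using dp p eq by auto
  qed
  ultimately show False by simp
qed



definition tightf :: "'a set set \<Rightarrow> bool" where
  "tightf F \<longleftrightarrow> F \<noteq> {} \<and> card (\<Union>F) = card F + 2"

lemma three_split: "card s = 3 \<Longrightarrow> y \<in> s \<Longrightarrow> \<exists>a b. s = {y, a, b} \<and> a \<noteq> b \<and> a \<noteq> y \<and> b \<noteq> y"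
  unfolding card_3_iff by auto

lemma three_split2:
  assumes "card s = 3" "p \<in> s" "q \<in> s" "p \<noteq> q"
  shows "\<exists>r. s = {p, q, r} \<and> r \<noteq> p \<and> r \<noteq> q"
proof -
  have f: "finite s" using assms(1) by (metis card.infinite zero_neq_numeral)
  have "card (s - {p, q}) = 1" using assms f by (simp add: card_Diff_subset)
  then obtain r where r: "s - {p, q} = {r}" using card_1_singletonE by blast
  then have "s = {p, q, r}" using assms by auto
  then show ?thesis using r by auto
qed

locale thinfam =
  fixes T :: "'a set set"
  assumes finT: "finite T" and thinT: "thin T" and three: "\<And>s. s \<in> T \<Longrightarrow> card s = 3"
begin

lemma finS: "s \<in> T \<Longrightarrow> finite s"
  using three by (metis card.infinite zero_neq_numeral)

lemma finU: "F \<subseteq> T \<Longrightarrow> finite (\<Union>F)"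
  using finS finT by (meson finite_Union finite_subset subsetD)

lemma finF: "F \<subseteq> T \<Longrightarrow> finite F"
  using finT finite_subset by blast

lemma thinD: "F \<subseteq> T \<Longrightarrow> F \<noteq> {} \<Longrightarrow> card F + 2 \<le> card (\<Union>F)"
  using thinT unfolding thin_def by blast

lemma single_tight: "s \<in> T \<Longrightarrow> tightf {s}"
  using three by (simp add: tightf_def)

lemma S2:
  assumes "F \<subseteq> T" "G \<subseteq> T" "tightf F" "tightf G" "F \<inter> G \<noteq> {}"
  shows "tightf (F \<union> G) \<and> tightf (F \<inter> G) \<and> \<Union>(F \<inter> G) = \<Union>F \<inter> \<Union>G"
proof -
  have fF: "finite F" "finite G" using assms(1,2) finF by auto
  have fU: "finite (\<Union>F)" "finite (\<Union>G)" using assms(1,2) finU by auto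
  have fI: "finite (\<Union>F \<inter> \<Union>G)" using fU by blast
  have c1: "card (\<Union>F \<union> \<Union>G) + card (\<Union>F \<inter> \<Union>G) = card (\<Union>F) + card (\<Union>G)"
    using card_Un_Int[OF fU] by simp
  have c2: "card (F \<union> G) + card (F \<inter> G) = card F + card G"
    using card_Un_Int[OF fF] by simp
  have u: "\<Union>(F \<union> G) = \<Union>F \<union> \<Union>G" by auto
  have sub: "\<Union>(F \<inter> G) \<subseteq> \<Union>F \<inter> \<Union>G" by auto
  have c3: "card (\<Union>(F \<inter> G)) \<le> card (\<Union>F \<inter> \<Union>G)"
    by (rule card_mono[OF fI sub])
  have t1: "card (F \<union> G) + 2 \<le> card (\<Union>(F \<union> G))"
    by (rule thinD) (use assms(1,2,3) in \<open>auto simp: tightf_def\<close>)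
  have t1': "card (F \<union> G) + 2 \<le> card (\<Union>F \<union> \<Union>G)" using t1 unfolding u .
  have t2: "card (F \<inter> G) + 2 \<le> card (\<Union>(F \<inter> G))"
    by (rule thinD) (use assms(1,2,5) in auto)
  have tF: "card (\<Union>F) = card F + 2" "card (\<Union>G) = card G + 2"
    using assms(3,4) unfolding tightf_def by auto
  have e1: "card (\<Union>F \<union> \<Union>G) = card (F \<union> G) + 2" using c1 c2 c3 t1' t2 tF by linarith
  have e2: "card (\<Union>(F \<inter> G)) = card (F \<inter> G) + 2" using c1 c2 c3 t1' t2 tF by linarith
  have e3: "card (\<Union>(F \<inter> G)) = card (\<Union>F \<inter> \<Union>G)" using c1 c2 c3 t1' t2 tF by linarith
  have i: "\<Union>(F \<inter> G) = \<Union>F \<inter> \<Union>G"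
    using card_subset_eq[OF fI sub e3] .
  have "F \<union> G \<noteq> {}" using assms(5) by blast
  then show ?thesis using e1 e2 i assms(5) unfolding tightf_def u by blast
qed

lemma S3:
  assumes "F \<subseteq> T" "G \<subseteq> T" "tightf F" "tightf G" "F \<inter> G = {}"
  shows "card (\<Union>F \<inter> \<Union>G) \<le> 2 \<and> (2 \<le> card (\<Union>F \<inter> \<Union>G) \<longrightarrow> tightf (F \<union> G))"
proof -
  have fF: "finite F" "finite G" using assms(1,2) finF by auto
  have fU: "finite (\<Union>F)" "finite (\<Union>G)" using assms(1,2) finU by auto
  have c1: "card (\<Union>F \<union> \<Union>G) + card (\<Union>F \<inter> \<Union>G) = card (\<Union>F) + card (\<Union>G)"
    using card_Un_Int[OF fU] by simp
  have c2: "card (F \<union> G) = card F + card G"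
    using card_Un_disjoint[OF fF assms(5)] by simp
  have u: "\<Union>(F \<union> G) = \<Union>F \<union> \<Union>G" by auto
  have t1: "card (F \<union> G) + 2 \<le> card (\<Union>(F \<union> G))"
    by (rule thinD) (use assms(1,2,3) in \<open>auto simp: tightf_def\<close>)
  have tF: "card (\<Union>F) = card F + 2" "card (\<Union>G) = card G + 2"
    using assms(3,4) unfolding tightf_def by auto
  have t1': "card (F \<union> G) + 2 \<le> card (\<Union>F \<union> \<Union>G)" using t1 u by simp
  have k: "card (\<Union>F \<inter> \<Union>G) \<le> 2" using c1 c2 t1' tF by linarith
  moreover have "2 \<le> card (\<Union>F \<inter> \<Union>G) \<Longrightarrow> card (\<Union>(F \<union> G)) = card (F \<union> G) + 2"
    using c1 c2 t1' tF u by simp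
  moreover have "F \<union> G \<noteq> {}" using assms(3) unfolding tightf_def by blast
  ultimately show ?thesis unfolding tightf_def by blast
qed

lemma no_absorb:
  assumes "G \<subseteq> T" "tightf G" "s \<in> T" "s \<notin> G" "s \<subseteq> \<Union>G"
  shows False
proof -
  have "\<Union>(insert s G) = \<Union>G" using assms by auto
  then have "card (\<Union>(insert s G)) = card (\<Union>G)" by simp
  moreover have "card (insert s G) = card G + 1" using assms(4) finF[OF assms(1)] by simp
  moreover have "card (insert s G) + 2 \<le> card (\<Union>(insert s G))"
    by (rule thinD) (use assms(1,3) in auto)
  moreover have "card (\<Union>G) = card G + 2" using assms(2) unfolding tightf_def by auto
  ultimately show False by linarith
qed

lemma add_tight:
  assumes "G \<subseteq> T" "tightf G" "s \<in> T" "s \<notin> G" "p \<in> s" "q \<in> s" "p \<noteq> q" "p \<in> \<Union>G" "q \<in> \<Union>G"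
  shows "tightf (insert s G)"
proof -
  obtain r where s: "s = {p, q, r}"
    using three_split2[OF three[OF assms(3)] assms(5-7)] by blast
  have u: "\<Union>(insert s G) \<subseteq> insert r (\<Union>G)" using s assms by auto
  have "card (\<Union>(insert s G)) \<le> card (insert r (\<Union>G))"
    by (rule card_mono[OF _ u]) (use finU[OF assms(1)] in simp)
  also have "\<dots> \<le> card (\<Union>G) + 1" using finU[OF assms(1)] by (simp add: card_insert_if)
  finally have a: "card (\<Union>(insert s G)) \<le> card (\<Union>G) + 1" .
  have b: "card (insert s G) = card G + 1" using assms(4) finF[OF assms(1)] by simp
  have c: "card (insert s G) + 2 \<le> card (\<Union>(insert s G))"
    by (rule thinD) (use assms(1,3) in auto)
  have "card (\<Union>G) = card G + 2" using assms(2) unfolding tightf_def by auto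
  then have "card (\<Union>(insert s G)) = card (insert s G) + 2" using a b c by linarith
  then show ?thesis unfolding tightf_def by simp
qed

definition mgood :: "'a set set \<Rightarrow> 'a \<Rightarrow> 'a \<Rightarrow> bool" where
  "mgood M y x \<longleftrightarrow> x \<noteq> y \<and> (\<exists>s\<in>M. y \<in> s \<and> x \<in> s \<and>
      \<not> (\<exists>F. F \<subseteq> M - {s} \<and> tightf F \<and> y \<in> \<Union>F \<and> x \<in> \<Union>F))"

lemma finite_subfam: "M \<subseteq> T \<Longrightarrow> finite {F. F \<subseteq> M}"
  using finF by simp

lemma claim:
  assumes "M \<subseteq> T" "tightf M" "y \<in> \<Union>M"
  shows "\<exists>x1 x2. x1 \<noteq> x2 \<and> mgood M y x1 \<and> mgood M y x2"
  using assms
proof (induction "card M" arbitrary: M rule: less_induct)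
  case less
  note MT = less.prems(1) and Mt = less.prems(2) and yM = less.prems(3)
  have finM: "finite M" using finF[OF MT] .
  obtain s where sM: "s \<in> M" and ys: "y \<in> s" using yM by blast
  have sT: "s \<in> T" using sM MT by blast
  obtain a b where sab: "s = {y, a, b}" and ab: "a \<noteq> b" "a \<noteq> y" "b \<noteq> y"
    using three_split[OF three[OF sT] ys] by blast
  define W where "W c F \<longleftrightarrow> F \<subseteq> M - {s} \<and> tightf F \<and> y \<in> \<Union>F \<and> c \<in> \<Union>F" for c F
  have goodc: "mgood M y c" if "c \<in> {a, b}" "\<not> (\<exists>F. W c F)" for c
  proof -
    have "c \<noteq> y" "c \<in> s" using that(1) ab sab by auto
    moreover have "\<not> (\<exists>F. F \<subseteq> M - {s} \<and> tightf F \<and> y \<in> \<Union>F \<and> c \<in> \<Union>F)"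
      using that(2) unfolding W_def .
    ultimately show ?thesis unfolding mgood_def using sM ys by blast
  qed
  have other: "d \<notin> \<Union>F" if "W c F" "{c, d} = {a, b}" for c d F
  proof
    assume "d \<in> \<Union>F"
    moreover have "c \<in> \<Union>F" "y \<in> \<Union>F" using that(1) unfolding W_def by auto
    ultimately have "s \<subseteq> \<Union>F" using sab that(2) by (metis insert_subset empty_subsetI doubleton_eq_iff)
    moreover have "F \<subseteq> T" "tightf F" "s \<notin> F" using that(1) MT unfolding W_def by auto
    ultimately show False using no_absorb sT by blast
  qed
  have SL: "\<exists>g \<in> \<Union>F. g \<noteq> c \<and> mgood M y g"
    if WF: "W c F" and mx: "\<forall>G. W c G \<longrightarrow> card G \<le> card F" and cab: "c \<in> {a, b}" for c F
  proof -
    have FT: "F \<subseteq> T" and Ft: "tightf F" and yF: "y \<in> \<Union>F" and cF: "c \<in> \<Union>F"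
      and FM: "F \<subseteq> M - {s}" using WF MT unfolding W_def by auto
    have "F \<subset> M" using FM sM by blast
    then have "card F < card M" using psubset_card_mono[OF finM] by blast
    then obtain x1 x2 where x12: "x1 \<noteq> x2" "mgood F y x1" "mgood F y x2"
      using less.hyps[OF _ FT Ft yF] by blast
    then obtain x where xc: "x \<noteq> c" and gx: "mgood F y x" by metis
    then obtain s' where s'F: "s' \<in> F" and ys': "y \<in> s'" and xs': "x \<in> s'"
      and nw: "\<not> (\<exists>G. G \<subseteq> F - {s'} \<and> tightf G \<and> y \<in> \<Union>G \<and> x \<in> \<Union>G)"
      and xy: "x \<noteq> y"
      unfolding mgood_def by blast
    have xF: "x \<in> \<Union>F" using s'F xs' by blast
    have nwM: "\<not> (\<exists>G. G \<subseteq> M - {s'} \<and> tightf G \<and> y \<in> \<Union>G \<and> x \<in> \<Union>G)"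
    proof
      assume "\<exists>G. G \<subseteq> M - {s'} \<and> tightf G \<and> y \<in> \<Union>G \<and> x \<in> \<Union>G"
      then obtain G where GM: "G \<subseteq> M - {s'}" and Gt: "tightf G" and yG: "y \<in> \<Union>G" and xG: "x \<in> \<Union>G"
        by blast
      have GT: "G \<subseteq> T" using GM MT by blast
      show False
      proof (cases "G \<inter> F = {}")
        case False
        from S2[OF GT FT Gt Ft False] have t: "tightf (G \<inter> F)" and e: "\<Union>(G \<inter> F) = \<Union>G \<inter> \<Union>F" by auto
        have "y \<in> \<Union>(G \<inter> F)" "x \<in> \<Union>(G \<inter> F)" unfolding e using yG xG yF xF by auto
        moreover have "G \<inter> F \<subseteq> F - {s'}" using GM by blast
        ultimately have "G \<inter> F \<subseteq> F - {s'} \<and> tightf (G \<inter> F) \<and> y \<in> \<Union>(G \<inter> F) \<and> x \<in> \<Union>(G \<inter> F)"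
          using t by blast
        with nw show False by blast
      next
        case True
        have s3: "card (\<Union>G \<inter> \<Union>F) \<le> 2 \<and> (2 \<le> card (\<Union>G \<inter> \<Union>F) \<longrightarrow> tightf (G \<union> F))"
          using S3[OF GT FT Gt Ft True] .
        have fI: "finite (\<Union>G \<inter> \<Union>F)" using finU[OF GT] by blast
        have "{y, x} \<subseteq> \<Union>G \<inter> \<Union>F" using yG xG yF xF by blast
        then have "card {y, x} \<le> card (\<Union>G \<inter> \<Union>F)" using card_mono[OF fI] by blast
        then have c2: "2 \<le> card (\<Union>G \<inter> \<Union>F)" using xy by simp
        then have tU: "tightf (G \<union> F)" using s3 by blast
        show False
        proof (cases "s \<in> G")
          case False
          then have "W c (G \<union> F)" using GM FM tU yF cF unfolding W_def by blast
          then have "card (G \<union> F) \<le> card F" using mx by blast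
          moreover have "card (G \<union> F) = card G + card F"
            using card_Un_disjoint[OF finF[OF GT] finF[OF FT] True] by simp
          moreover have "card G > 0" using Gt finF[OF GT] unfolding tightf_def by auto
          ultimately show False by linarith
        next
          case True
          then have "c \<in> \<Union>G" using sab cab by blast
          then have "{y, x, c} \<subseteq> \<Union>G \<inter> \<Union>F" using yG xG yF xF cF by blast
          then have "card {y, x, c} \<le> card (\<Union>G \<inter> \<Union>F)" using card_mono[OF fI] by blast
          moreover have "card {y, x, c} = 3" using xy xc cab ab by auto
          ultimately show False using s3 by linarith
        qed
      qed
    qed
    have "s' \<in> M" using s'F FM by blast
    then have "mgood M y x" unfolding mgood_def using xy ys' xs' nwM by blast
    then show ?thesis using xF xc by blast
  qed
  have maxW: "\<exists>F. W c F \<and> (\<forall>G. W c G \<longrightarrow> card G \<le> card F)" if "W c F0" for c F0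
  proof -
    have "\<forall>G. W c G \<longrightarrow> card G < Suc (card M)"
    proof (intro allI impI)
      fix G assume "W c G"
      then have "G \<subseteq> M" unfolding W_def by blast
      then have "card G \<le> card M" by (rule card_mono[OF finM])
      then show "card G < Suc (card M)" by simp
    qed
    then show ?thesis using ex_has_greatest_nat[of "W c" F0 card "Suc (card M)"] that by blast
  qed
  show ?case
  proof (cases "\<exists>F. W a F")
    case Fa: True
    then obtain Fa where WFa: "W a Fa" and mxa: "\<forall>G. W a G \<longrightarrow> card G \<le> card Fa" using maxW by blast
    obtain ga where gaF: "ga \<in> \<Union>Fa" and gaa: "ga \<noteq> a" and gga: "mgood M y ga"
      using SL[OF WFa mxa] by blast
    have bFa: "b \<notin> \<Union>Fa" using other[OF WFa] by blast
    show ?thesis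
    proof (cases "\<exists>F. W b F")
      case False
      then have "mgood M y b" using goodc by blast
      moreover have "ga \<noteq> b" using gaF bFa by blast
      ultimately show ?thesis using gga by blast
    next
      case True
      then obtain Fb where WFb: "W b Fb" and mxb: "\<forall>G. W b G \<longrightarrow> card G \<le> card Fb" using maxW by blast
      obtain gb where gbF: "gb \<in> \<Union>Fb" and gbb: "gb \<noteq> b" and ggb: "mgood M y gb"
        using SL[OF WFb mxb] by blast
      have "ga \<noteq> gb"
      proof
        assume eq: "ga = gb"
        have FaT: "Fa \<subseteq> T" "tightf Fa" "y \<in> \<Union>Fa" "a \<in> \<Union>Fa" "Fa \<subseteq> M - {s}"
          using WFa MT unfolding W_def by auto
        have FbT: "Fb \<subseteq> T" "tightf Fb" "y \<in> \<Union>Fb" "b \<in> \<Union>Fb" "Fb \<subseteq> M - {s}"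
          using WFb MT unfolding W_def by auto
        have gy: "ga \<noteq> y" using gga unfolding mgood_def by blast
        have tU: "tightf (Fa \<union> Fb)"
        proof (cases "Fa \<inter> Fb = {}")
          case False
          then show ?thesis using S2[OF FaT(1) FbT(1) FaT(2) FbT(2)] by blast
        next
          case True
          have fI: "finite (\<Union>Fa \<inter> \<Union>Fb)" using finU[OF FaT(1)] by blast
          have "{y, ga} \<subseteq> \<Union>Fa \<inter> \<Union>Fb" using FaT FbT gaF gbF eq by blast
          then have "card {y, ga} \<le> card (\<Union>Fa \<inter> \<Union>Fb)" using card_mono[OF fI] by blast
          then have "2 \<le> card (\<Union>Fa \<inter> \<Union>Fb)" using gy by simp
          then show ?thesis using S3[OF FaT(1) FbT(1) FaT(2) FbT(2) True] by blast
        qed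
        have "s \<subseteq> \<Union>(Fa \<union> Fb)" using sab FaT FbT by blast
        moreover have "Fa \<union> Fb \<subseteq> T" "s \<notin> Fa \<union> Fb" using FaT FbT by auto
        ultimately show False using no_absorb[OF _ tU sT] by blast
      qed
      then show ?thesis using gga ggb by blast
    qed
  next
    case Fa: False
    then have ga: "mgood M y a" using goodc by blast
    show ?thesis
    proof (cases "\<exists>F. W b F")
      case False
      then have "mgood M y b" using goodc by blast
      then show ?thesis using ga ab by blast
    next
      case True
      then obtain Fb where WFb: "W b Fb" and mxb: "\<forall>G. W b G \<longrightarrow> card G \<le> card Fb" using maxW by blast
      obtain gb where gbF: "gb \<in> \<Union>Fb" and ggb: "mgood M y gb"
        using SL[OF WFb mxb] by blast
      have "a \<notin> \<Union>Fb" using other[OF WFb] by blast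
      then have "gb \<noteq> a" using gbF by blast
      then show ?thesis using ga ggb by blast
    qed
  qed
qed

lemma good_exists:
  assumes "y \<in> \<Union>T"
  shows "\<exists>x. x \<noteq> y \<and> x \<in> \<Union>T \<and> card {t\<in>T. y \<in> t \<and> x \<in> t} \<le> 1 \<and>
    (\<forall>T'. T' \<subseteq> T - {t\<in>T. y \<in> t \<and> x \<in> t} \<longrightarrow> T' \<noteq> {} \<longrightarrow> y \<in> \<Union>T' \<longrightarrow> x \<in> \<Union>T'
       \<longrightarrow> card T' + 3 \<le> card (\<Union>T'))"
proof -
  obtain s0 where s0T: "s0 \<in> T" and ys0: "y \<in> s0" using assms by blast
  define P where "P F \<longleftrightarrow> F \<subseteq> T \<and> tightf F \<and> s0 \<in> F" for F
  have P0: "P {s0}" unfolding P_def using s0T single_tight by auto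
  have bnd: "\<forall>F. P F \<longrightarrow> card F < Suc (card T)"
  proof (intro allI impI)
    fix F assume "P F"
    then have "card F \<le> card T" unfolding P_def using card_mono[OF finT] by blast
    then show "card F < Suc (card T)" by simp
  qed
  obtain M where PM: "P M" and mx: "\<forall>F. P F \<longrightarrow> card F \<le> card M"
    using ex_has_greatest_nat[of P "{s0}" card "Suc (card T)"] P0 bnd by blast
  have MT: "M \<subseteq> T" and Mt: "tightf M" and s0M: "s0 \<in> M" using PM unfolding P_def by auto
  have yM: "y \<in> \<Union>M" using s0M ys0 by blast
  obtain x where gx: "mgood M y x" using claim[OF MT Mt yM] by blast
  then obtain s where sM: "s \<in> M" and ys: "y \<in> s" and xs: "x \<in> s" and xy: "x \<noteq> y"
    and nw: "\<not> (\<exists>F. F \<subseteq> M - {s} \<and> tightf F \<and> y \<in> \<Union>F \<and> x \<in> \<Union>F)"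
    unfolding mgood_def by blast
  have sT: "s \<in> T" using sM MT by blast
  have absorb: "F \<subseteq> M" if FT: "F \<subseteq> T" and Ft: "tightf F" and sF: "s \<in> F" for F
  proof -
    have "F \<inter> M \<noteq> {}" using sF sM by blast
    then have "tightf (F \<union> M)" using S2[OF FT MT Ft Mt] by blast
    then have "P (F \<union> M)" unfolding P_def using FT MT s0M by blast
    then have "card (F \<union> M) \<le> card M" using mx by blast
    moreover have "finite (F \<union> M)" using finF FT MT by blast
    ultimately have "M = F \<union> M" using card_subset_eq[of "F \<union> M" M] by (metis Un_upper2 antisym card_mono)
    then show ?thesis by blast
  qed
  let ?D = "{t\<in>T. y \<in> t \<and> x \<in> t}"
  have Ds: "?D \<subseteq> {s}"
  proof
    fix t assume tD: "t \<in> ?D"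
    show "t \<in> {s}"
    proof (rule ccontr)
      assume "t \<notin> {s}"
      then have ts: "t \<notin> {s}" .
      have tT: "t \<in> T" using tD by blast
      have "tightf (insert t {s})"
        by (rule add_tight[of "{s}" t y x]) (use sT single_tight tT ts xy ys xs tD in auto)
      moreover have "insert t {s} \<subseteq> T" using sT tT by blast
      ultimately have "insert t {s} \<subseteq> M" using absorb[of "insert t {s}"] by blast
      then have "{t} \<subseteq> M - {s} \<and> tightf {t} \<and> y \<in> \<Union>{t} \<and> x \<in> \<Union>{t}"
        using ts single_tight[OF tT] tD by auto
      then show False using nw by blast
    qed
  qed
  have "card ?D \<le> 1" using card_mono[OF _ Ds] by simp
  moreover have "x \<in> \<Union>T" using xs sT by blast
  moreover have "card T' + 3 \<le> card (\<Union>T')"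
    if T'D: "T' \<subseteq> T - ?D" and ne: "T' \<noteq> {}" and yT: "y \<in> \<Union>T'" and xT: "x \<in> \<Union>T'" for T'
  proof (rule ccontr)
    assume "\<not> card T' + 3 \<le> card (\<Union>T')"
    moreover have "card T' + 2 \<le> card (\<Union>T')" using thinD[of T'] T'D ne by blast
    ultimately have "card (\<Union>T') = card T' + 2" by linarith
    then have Tt: "tightf T'" using ne unfolding tightf_def by blast
    have T'T: "T' \<subseteq> T" using T'D by blast
    have sT': "s \<notin> T'" using T'D sT ys xs by blast
    have "tightf (insert s T')"
      by (rule add_tight[OF T'T Tt sT sT' ys xs]) (use xy yT xT in auto)
    moreover have "insert s T' \<subseteq> T" using sT T'T by blast
    ultimately have "insert s T' \<subseteq> M" using absorb[of "insert s T'"] by blast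
    then have "T' \<subseteq> M - {s} \<and> tightf T' \<and> y \<in> \<Union>T' \<and> x \<in> \<Union>T'"
      using sT' Tt yT xT by blast
    then show False using nw by blast
  qed
  ultimately show ?thesis using xy by blast
qed

end


definition midp :: "('a \<Rightarrow> nat) \<Rightarrow> 'a set \<Rightarrow> 'a \<Rightarrow> bool" where
  "midp r s m \<longleftrightarrow> m \<in> s \<and> (\<exists>p\<in>s. \<exists>q\<in>s. r p < r m \<and> r m < r q)"

lemma thin_subset: "thin T \<Longrightarrow> T' \<subseteq> T \<Longrightarrow> thin T'"
  unfolding thin_def by blast

lemma order_exists:
  assumes "finite Y" "T \<subseteq> {s. s \<subseteq> Y \<and> card s = 3}" "thin T" "y \<in> Y"
  shows "\<exists>r. r ` Y = {..<card Y} \<and> inj_on r Y \<and> r y = 0 \<and>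
           (\<forall>s1\<in>T. \<forall>s2\<in>T. \<forall>m. midp r s1 m \<longrightarrow> midp r s2 m \<longrightarrow> s1 = s2)"
  using assms
proof (induction "card Y" arbitrary: Y T y rule: less_induct)
  case less
  note finY = less.prems(1) and TY = less.prems(2) and thT = less.prems(3) and yY = less.prems(4)
  show ?case
  proof (cases "Y = {y}")
    case True
    have "T = {}"
    proof (rule ccontr)
      assume "T \<noteq> {}"
      then obtain s where "s \<in> T" by blast
      then have "s \<subseteq> {y}" "card s = 3" using TY True by auto
      then show False using card_mono[of "{y}" s] by simp
    qed
    then show ?thesis using True by (intro exI[of _ "\<lambda>_. 0"]) auto
  next
    case False
    have finT: "finite T"
    proof -
      have "T \<subseteq> Pow Y" using TY by blast
      then show ?thesis using finY finite_subset by blast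
    qed
    interpret thinfam T
      by unfold_locales (use finT thT TY in auto)
    define D where "D x = {t\<in>T. y \<in> t \<and> x \<in> t}" for x
    have "\<exists>x. x \<in> Y \<and> x \<noteq> y \<and> card (D x) \<le> 1 \<and>
      (\<forall>T'. T' \<subseteq> T - D x \<longrightarrow> T' \<noteq> {} \<longrightarrow> y \<in> \<Union>T' \<longrightarrow> x \<in> \<Union>T'
       \<longrightarrow> card T' + 3 \<le> card (\<Union>T'))"
    proof (cases "y \<in> \<Union>T")
      case True
      then obtain x where "x \<noteq> y \<and> x \<in> \<Union>T \<and> card (D x) \<le> 1 \<and>
        (\<forall>T'. T' \<subseteq> T - D x \<longrightarrow> T' \<noteq> {} \<longrightarrow> y \<in> \<Union>T' \<longrightarrow> x \<in> \<Union>T'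
         \<longrightarrow> card T' + 3 \<le> card (\<Union>T'))"
        using good_exists[OF True] unfolding D_def by blast
      moreover have "\<Union>T \<subseteq> Y" using TY by blast
      ultimately show ?thesis by blast
    next
      case False
      obtain x where "x \<in> Y" "x \<noteq> y" using \<open>Y \<noteq> {y}\<close> yY by blast
      moreover have "D x = {}" unfolding D_def using False by blast
      moreover have "\<forall>T'. T' \<subseteq> T - D x \<longrightarrow> y \<notin> \<Union>T'" using False by blast
      ultimately show ?thesis by (intro exI[of _ x]) auto
    qed
    then obtain x where xY: "x \<in> Y" and xy: "x \<noteq> y" and cD: "card (D x) \<le> 1"
      and gd: "\<And>T'. T' \<subseteq> T - D x \<Longrightarrow> T' \<noteq> {} \<Longrightarrow> y \<in> \<Union>T' \<Longrightarrow> x \<in> \<Union>T'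
         \<Longrightarrow> card T' + 3 \<le> card (\<Union>T')"
      by blast
    define Dx where "Dx = D x"
    have Dx_iff: "t \<in> Dx \<longleftrightarrow> t \<in> T \<and> y \<in> t \<and> x \<in> t" for t unfolding Dx_def D_def by blast
    define ren where "ren s = (if y \<in> s then insert x (s - {y}) else s)" for s
    define T2 where "T2 = ren ` (T - Dx)"
    define Y2 where "Y2 = Y - {y}"
    have Y2sub: "Y2 \<subset> Y" unfolding Y2_def using yY by blast
    have cY2: "card Y2 < card Y" using psubset_card_mono[OF finY Y2sub] .
    have x2: "x \<in> Y2" unfolding Y2_def using xY xy by blast
    have sY: "s \<subseteq> Y" "card s = 3" if "s \<in> T" for s using that TY by auto
    have ren_ok: "ren s \<subseteq> Y2 \<and> card (ren s) = 3" if sT: "s \<in> T - Dx" for s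
    proof (cases "y \<in> s")
      case True
      then have xs: "x \<notin> s" using sT Dx_iff by blast
      have fs: "finite s" using sT finS by blast
      have "card (s - {y}) = 2" using sY(2)[of s] sT True fs by (simp add: card_Diff_singleton)
      then have "card (insert x (s - {y})) = 3" using xs fs by simp
      moreover have "insert x (s - {y}) \<subseteq> Y2" using sY(1)[of s] sT x2 unfolding Y2_def by blast
      ultimately show ?thesis unfolding ren_def using True by simp
    next
      case False
      then show ?thesis unfolding ren_def Y2_def using sY[of s] sT by auto
    qed
    have ren_inj: "inj_on ren (T - Dx)"
    proof (rule inj_onI)
      fix s1 s2 assume s1: "s1 \<in> T - Dx" and s2: "s2 \<in> T - Dx" and eq: "ren s1 = ren s2"
      have xs1: "y \<in> s1 \<Longrightarrow> x \<notin> s1" and xs2: "y \<in> s2 \<Longrightarrow> x \<notin> s2" using s1 s2 Dx_iff by blast+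
      have mixed: False if a1: "s1' \<in> T - Dx" and a2: "s2' \<in> T - Dx" and ya: "y \<in> s1'" and yb: "y \<notin> s2'"
        and e: "insert x (s1' - {y}) = s2'" for s1' s2'
      proof -
        have ne: "s1' \<noteq> s2'" using ya yb by blast
        let ?T' = "{s1', s2'}"
        have "?T' \<subseteq> T - Dx" using a1 a2 by blast
        moreover have "y \<in> \<Union>?T'" "x \<in> \<Union>?T'" using ya e by auto
        ultimately have "card ?T' + 3 \<le> card (\<Union>?T')" using gd unfolding Dx_def by blast
        moreover have "card ?T' = 2" using ne by simp
        moreover have "\<Union>?T' = insert x s1'" using e ya by auto
        moreover have "card (insert x s1') \<le> 4"
          using sY(2)[of s1'] a1 finS[of s1'] by (simp add: card_insert_if)
        ultimately show False by simp
      qed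
      show "s1 = s2"
      proof (cases "y \<in> s1"; cases "y \<in> s2")
        assume "y \<in> s1" "y \<in> s2"
        then have "insert x (s1 - {y}) = insert x (s2 - {y})" using eq unfolding ren_def by simp
        moreover have n1: "x \<notin> s1 - {y}" using xs1 \<open>y \<in> s1\<close> by blast
        moreover have n2: "x \<notin> s2 - {y}" using xs2 \<open>y \<in> s2\<close> by blast
        ultimately have e: "s1 - {y} = s2 - {y}"
          using Diff_insert_absorb[OF n1] Diff_insert_absorb[OF n2] by metis
        have "s1 = insert y (s1 - {y})" using \<open>y \<in> s1\<close> by blast
        also have "\<dots> = insert y (s2 - {y})" using e by simp
        also have "\<dots> = s2" using \<open>y \<in> s2\<close> by blast
        finally show ?thesis .
      next
        assume a: "y \<in> s1" "y \<notin> s2"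
        then have "insert x (s1 - {y}) = s2" using eq unfolding ren_def by simp
        then show ?thesis using mixed[OF s1 s2 a] by blast
      next
        assume a: "y \<notin> s1" "y \<in> s2"
        then have "insert x (s2 - {y}) = s1" using eq unfolding ren_def by simp
        then show ?thesis using mixed[OF s2 s1 a(2) a(1)] by blast
      next
        assume "y \<notin> s1" "y \<notin> s2"
        then show ?thesis using eq unfolding ren_def by simp
      qed
    qed
    have T2Y: "T2 \<subseteq> {s. s \<subseteq> Y2 \<and> card s = 3}" unfolding T2_def using ren_ok by blast
    have thT2: "thin T2"
      unfolding thin_def
    proof (intro allI impI)
      fix T'' assume a: "T'' \<subseteq> T2 \<and> T'' \<noteq> {}"
      define T' where "T' = {s \<in> T - Dx. ren s \<in> T''}"
      have T'sub: "T' \<subseteq> T - Dx" unfolding T'_def by blast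
      have imgT: "ren ` T' = T''" using a unfolding T'_def T2_def by blast
      have cT: "card T'' = card T'"
        using imgT card_image inj_on_subset[OF ren_inj T'sub] by metis
      have ne: "T' \<noteq> {}" using imgT a by blast
      have T'T: "T' \<subseteq> T" using T'sub by blast
      have fU: "finite (\<Union>T')" using finU[OF T'T] .
      have "\<Union>T'' \<subseteq> Y" using a T2Y unfolding Y2_def by blast
      then have fU2: "finite (\<Union>T'')" using finY finite_subset by blast
      have th: "card T' + 2 \<le> card (\<Union>T')" using thinD[OF T'T ne] .
      have sub1: "\<Union>T' - {y} \<subseteq> \<Union>T''"
      proof
        fix z assume "z \<in> \<Union>T' - {y}"
        then obtain s where "s \<in> T'" "z \<in> s" "z \<noteq> y" by blast
        then have "z \<in> ren s" "ren s \<in> T''" using imgT unfolding ren_def by auto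
        then show "z \<in> \<Union>T''" by blast
      qed
      show "card T'' + 2 \<le> card (\<Union>T'')"
      proof (cases "y \<in> \<Union>T'")
        case False
        then have "\<Union>T' \<subseteq> \<Union>T''" using sub1 by blast
        then have "card (\<Union>T') \<le> card (\<Union>T'')" by (rule card_mono[OF fU2])
        then show ?thesis using th cT by linarith
      next
        case True
        have xin: "x \<in> \<Union>T''"
        proof -
          obtain s where "s \<in> T'" "y \<in> s" using True by blast
          then have "ren s \<in> T''" "x \<in> ren s" using imgT unfolding ren_def by auto
          then show ?thesis by blast
        qed
        show ?thesis
        proof (cases "x \<in> \<Union>T'")
          case True
          have "card T' + 3 \<le> card (\<Union>T')" using gd[OF _ ne \<open>y \<in> \<Union>T'\<close> True] T'sub unfolding Dx_def by blast
          moreover have "card (\<Union>T' - {y}) = card (\<Union>T') - 1" using \<open>y \<in> \<Union>T'\<close> fU by simp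
          moreover have "card (\<Union>T' - {y}) \<le> card (\<Union>T'')" using card_mono[OF fU2 sub1] .
          ultimately show ?thesis using cT by linarith
        next
          case False
          have "insert x (\<Union>T' - {y}) \<subseteq> \<Union>T''" using sub1 xin by blast
          then have "card (insert x (\<Union>T' - {y})) \<le> card (\<Union>T'')" using card_mono[OF fU2] by blast
          moreover have "card (insert x (\<Union>T' - {y})) = card (\<Union>T')"
          proof -
            have "card (\<Union>T') > 0" using \<open>y \<in> \<Union>T'\<close> fU card_gt_0_iff by blast
            then show ?thesis using False \<open>y \<in> \<Union>T'\<close> fU xy by (simp add: card_insert_if)
          qed
          ultimately show ?thesis using th cT by linarith
        qed
      qed
    qed
    have finY2: "finite Y2" using finY unfolding Y2_def by blast
    obtain r' where r'img: "r' ` Y2 = {..<card Y2}" and r'inj: "inj_on r' Y2" and r'x: "r' x = 0"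
      and r'v: "\<forall>s1\<in>T2. \<forall>s2\<in>T2. \<forall>m. midp r' s1 m \<longrightarrow> midp r' s2 m \<longrightarrow> s1 = s2"
      using less.hyps[OF cY2 finY2 T2Y thT2 x2] by blast
    define r where "r z = (if z = y then 0 else Suc (r' z))" for z
    have cY: "card Y = Suc (card Y2)" unfolding Y2_def using card_Suc_Diff1[OF finY yY] by simp
    have rimg: "r ` Y = {..<card Y}"
    proof -
      have "Y = insert y Y2" unfolding Y2_def using yY by blast
      then have "r ` Y = insert 0 (Suc ` (r' ` Y2))" unfolding r_def Y2_def by auto
      also have "\<dots> = insert 0 (Suc ` {..<card Y2})" using r'img by simp
      also have "\<dots> = {..<Suc (card Y2)}" by (auto simp: image_iff less_Suc_eq_0_disj)
      finally show ?thesis using cY by simp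
    qed
    have rinj: "inj_on r Y"
      using rimg finY by (simp add: eq_card_imp_inj_on)
    have r0: "r z = 0 \<longleftrightarrow> z = y" for z unfolding r_def by simp
    have ry: "r y = 0" unfolding r_def by simp
    have rx: "r x = 1" unfolding r_def using xy r'x by simp
    have r'pos: "0 < r' z" if "z \<in> Y2" "z \<noteq> x" for z
      using r'inj that x2 r'x by (metis gr0I inj_on_contraD)
    have M1: "midp r' (ren s) m" if sT: "s \<in> T - Dx" and md: "midp r s m" for s m
    proof -
      obtain p q where ms: "m \<in> s" and ps: "p \<in> s" and qs: "q \<in> s" and pm: "r p < r m" and mq: "r m < r q"
        using md unfolding midp_def by blast
      have my: "m \<noteq> y" using pm ry by auto
      have qy: "q \<noteq> y" using mq ry by auto
      show ?thesis
      proof (cases "y \<in> s")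
        case False
        then have "p \<noteq> y" using ps by blast
        then have "r' p < r' m" "r' m < r' q" using pm mq my qy unfolding r_def by auto
        then show ?thesis unfolding midp_def ren_def using False ms ps qs by auto
      next
        case True
        have xs: "x \<notin> s" using sT True Dx_iff by blast
        have mY2: "m \<in> Y2" using ms sY(1)[of s] sT my unfolding Y2_def by blast
        have mx: "m \<noteq> x" using ms xs by blast
        have rmq: "r' m < r' q" using mq my qy unfolding r_def by auto
        have "\<exists>p'\<in>ren s. r' p' < r' m"
        proof (cases "p = y")
          case True
          have "x \<in> ren s" unfolding ren_def using \<open>y \<in> s\<close> by simp
          moreover have "r' x < r' m" using r'x r'pos[OF mY2 mx] by simp
          ultimately show ?thesis by blast
        next
          case False
          then have "p \<in> ren s" using ps unfolding ren_def by auto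
          moreover have "r' p < r' m" using pm False my unfolding r_def by auto
          ultimately show ?thesis by blast
        qed
        moreover have "m \<in> ren s" "q \<in> ren s" using ms qs my qy unfolding ren_def by auto
        ultimately show ?thesis unfolding midp_def using rmq by blast
      qed
    qed
    have M2: "m = x" if sD: "s \<in> Dx" and md: "midp r s m" for s m
    proof -
      have sT: "s \<in> T" and ys: "y \<in> s" and xs: "x \<in> s" using sD Dx_iff by auto
      obtain p q where ms: "m \<in> s" and ps: "p \<in> s" and qs: "q \<in> s" and pm: "r p < r m" and mq: "r m < r q"
        using md unfolding midp_def by blast
      obtain z where sz: "s = {y, x, z}" and zy: "z \<noteq> y" and zx: "z \<noteq> x"
        using three_split2[OF sY(2)[OF sT] ys xs xy[symmetric]] by blast
      have zY2: "z \<in> Y2" using sY(1)[OF sT] sz zy unfolding Y2_def by blast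
      have rz: "r z \<ge> 2" using r'pos[OF zY2 zx] zy unfolding r_def by simp
      have "m \<noteq> y" using pm ry by auto
      moreover have "m \<noteq> z"
      proof
        assume "m = z"
        then have "r z < r q" using mq by simp
        moreover have "q = y \<or> q = x \<or> q = z" using qs sz by blast
        ultimately show False using rz rx ry by auto
      qed
      ultimately show ?thesis using ms sz by blast
    qed
    have M3: "s \<in> Dx" if sT: "s \<in> T" and md: "midp r s x" for s
    proof -
      obtain p where xs: "x \<in> s" and ps: "p \<in> s" and "r p < r x" using md unfolding midp_def by blast
      then have "r p = 0" using rx by simp
      then have "p = y" using r0 by blast
      then show ?thesis using Dx_iff sT xs ps by blast
    qed
    have valid: "\<forall>s1\<in>T. \<forall>s2\<in>T. \<forall>m. midp r s1 m \<longrightarrow> midp r s2 m \<longrightarrow> s1 = s2"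
    proof (intro ballI allI impI)
      fix s1 s2 m assume s1: "s1 \<in> T" and s2: "s2 \<in> T" and m1: "midp r s1 m" and m2: "midp r s2 m"
      have finD: "finite Dx" unfolding Dx_def D_def using finT by simp
      have cDx: "card Dx \<le> 1" using cD unfolding Dx_def .
      show "s1 = s2"
      proof (cases "s1 \<in> Dx"; cases "s2 \<in> Dx")
        assume "s1 \<in> Dx" "s2 \<in> Dx"
        then show ?thesis using cDx card_le_Suc0_iff_eq[OF finD] by simp
      next
        assume a: "s1 \<in> Dx" "s2 \<notin> Dx"
        then have "m = x" using M2 m1 by blast
        then show ?thesis using M3[OF s2] m2 a by blast
      next
        assume a: "s1 \<notin> Dx" "s2 \<in> Dx"
        then have "m = x" using M2 m2 by blast
        then show ?thesis using M3[OF s1] m1 a by blast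
      next
        assume a: "s1 \<notin> Dx" "s2 \<notin> Dx"
        then have "midp r' (ren s1) m" "midp r' (ren s2) m" using M1 s1 s2 m1 m2 by auto
        moreover have "ren s1 \<in> T2" "ren s2 \<in> T2" unfolding T2_def using a s1 s2 by auto
        ultimately have "ren s1 = ren s2" using r'v by blast
        then show ?thesis using ren_inj a s1 s2 by (meson DiffI inj_onD)
      qed
    qed
    show ?thesis
      by (intro exI[of _ r]) (use rimg rinj valid r0 in auto)
  qed
qed



definition cV :: "nat \<Rightarrow> nat set" where "cV n = {k. k < n - 2} \<union> {k. n \<le> k \<and> k < 2 * n}"
definition att :: "nat \<Rightarrow> nat \<Rightarrow> nat" where "att n i = min (i - 1) (n - 3)"
definition cpar :: "nat \<Rightarrow> nat \<Rightarrow> nat" where "cpar n v = (if v < n then v - 1 else att n (v - n))"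
definition cE :: "nat \<Rightarrow> (nat \<times> nat) set" where
  "cE n = {(u, v). u \<in> cV n \<and> v \<in> cV n \<and> ((u \<noteq> 0 \<and> v = cpar n u) \<or> (v \<noteq> 0 \<and> u = cpar n v))}"

locale cat =
  fixes n :: nat
  assumes n4: "4 \<le> n"
begin

abbreviation "V \<equiv> cV n"
abbreviation "E \<equiv> cE n"
abbreviation "par \<equiv> cpar n"

lemma V_iff: "v \<in> V \<longleftrightarrow> v < n - 2 \<or> (n \<le> v \<and> v < 2 * n)"
  unfolding cV_def by auto

lemma E_iff: "(u, v) \<in> E \<longleftrightarrow> u \<in> V \<and> v \<in> V \<and> ((u \<noteq> 0 \<and> v = par u) \<or> (v \<noteq> 0 \<and> u = par v))"
  unfolding cE_def by auto

lemma att_le: "att n i \<le> n - 3" unfolding att_def by simp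

lemma par_spine: "v < n \<Longrightarrow> par v = v - 1" unfolding cpar_def by simp
lemma par_leaf: "n \<le> v \<Longrightarrow> par v = att n (v - n)" unfolding cpar_def by simp

lemma par_lt: "par v < n - 2"
  if "v \<in> V" "v \<noteq> 0" for v
  using that n4 att_le[of "v - n"] unfolding cpar_def V_iff by auto

lemma par_less: "v \<in> V \<Longrightarrow> v \<noteq> 0 \<Longrightarrow> par v < v"
  using n4 att_le[of "v - n"] unfolding cpar_def V_iff by auto

lemma par_in: "v \<in> V \<Longrightarrow> v \<noteq> 0 \<Longrightarrow> par v \<in> V"
  using par_lt unfolding V_iff by blast

lemma edge_par: "v \<in> V \<Longrightarrow> v \<noteq> 0 \<Longrightarrow> (v, par v) \<in> E"
  using par_in E_iff by blast

lemma symE: "sym E"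
  unfolding sym_def E_iff by blast

lemma irrE: "(v, v) \<notin> E"
  using par_less E_iff by fastforce

lemma EV: "E \<subseteq> V \<times> V"
  using E_iff by auto

lemma finV: "finite V" unfolding cV_def by auto

lemma walk_root: "v \<in> V \<Longrightarrow> \<exists>p. walk E p \<and> hd p = v \<and> last p = 0"
proof (induction v rule: less_induct)
  case (less v)
  show ?case
  proof (cases "v = 0")
    case True then show ?thesis by (intro exI[of _ "[0]"]) simp
  next
    case False
    then obtain p where p: "walk E p" "hd p = par v" "last p = 0"
      using less.IH[of "par v"] par_less par_in less.prems by blast
    have "p \<noteq> []" using p by auto
    then have "walk E (v # p)" using p edge_par[OF less.prems False] by (cases p) auto
    then show ?thesis using p \<open>p \<noteq> []\<close> by (intro exI[of _ "v # p"]) simp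
  qed
qed

lemma connected: "u \<in> V \<Longrightarrow> v \<in> V \<Longrightarrow> \<exists>p. gpath E u v p"
proof -
  assume u: "u \<in> V" and v: "v \<in> V"
  obtain pu where pu: "walk E pu" "hd pu = u" "last pu = 0" using walk_root[OF u] by blast
  obtain pv where pv: "walk E pv" "hd pv = v" "last pv = 0" using walk_root[OF v] by blast
  have nu: "pu \<noteq> []" and nv: "pv \<noteq> []" using pu pv by auto
  have r: "walk E (rev pv)" using walk_rev[OF symE pv(1)] .
  have r0: "rev pv = 0 # tl (rev pv)" using nv pv(3)
    by (metis hd_rev list.collapse rev_is_Nil_conv)
  have pu0: "pu = butlast pu @ [0]" using nu pu(3) by (metis append_butlast_last_id)
  have "walk E (butlast pu @ 0 # tl (rev pv))"
    by (rule walk_append) (use pu(1) pu0 r r0 in metis)+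
  moreover have "hd (butlast pu @ 0 # tl (rev pv)) = u"
    using pu(2) pu0 by (metis hd_append list.sel(1))
  moreover have "last (butlast pu @ 0 # tl (rev pv)) = v"
    using r0 pv(2) nv by (metis last_appendR last_rev list.distinct(1))
  ultimately show ?thesis unfolding gpath_def using walk_shorten by metis
qed

lemma edge_up: "(u, v) \<in> E \<Longrightarrow> u < v \<Longrightarrow> u = par v"
  using E_iff par_less by fastforce

lemma no_cycle: "\<not> has_cycle E"
proof
  assume "has_cycle E"
  then obtain p where wp: "walk E p" and dp: "distinct p" and L3: "length p \<ge> 3" and cl: "(last p, hd p) \<in> E"
    unfolding has_cycle_def by blast
  define L where "L = length p"
  have ne: "p \<noteq> []" using L3 by auto
  have wE: "(p ! j, p ! Suc j) \<in> E" if "j < L - 1" for j using wp that unfolding walk_def L_def by blast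
  have lastp: "last p = p ! (L - 1)" using ne unfolding L_def by (simp add: last_conv_nth)
  have hdp: "hd p = p ! 0" using ne by (simp add: hd_conv_nth)
  define M where "M = Max (set p)"
  have "M \<in> set p" unfolding M_def using ne by simp
  then obtain i where iL: "i < L" and pi: "p ! i = M" unfolding L_def by (metis in_set_conv_nth)
  define ip where "ip = (if i = 0 then L - 1 else i - 1)"
  define iN where "iN = (if i = L - 1 then 0 else i + 1)"
  have e1: "(p ! ip, p ! i) \<in> E"
  proof (cases "i = 0")
    case True then show ?thesis using cl lastp hdp unfolding ip_def by simp
  next
    case False then show ?thesis using wE[of "i - 1"] iL unfolding ip_def by simp
  qed
  have e2: "(p ! i, p ! iN) \<in> E"
  proof (cases "i = L - 1")
    case True then show ?thesis using cl lastp hdp unfolding iN_def by simp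
  next
    case False then show ?thesis using wE[of i] iL unfolding iN_def by simp
  qed
  have ipL: "ip < L" "iN < L" unfolding ip_def iN_def using iL L3 L_def by auto
  have dif: "ip \<noteq> i" "iN \<noteq> i" "ip \<noteq> iN" unfolding ip_def iN_def using iL L3 L_def by auto
  have "p ! ip \<noteq> p ! i" "p ! iN \<noteq> p ! i" "p ! ip \<noteq> p ! iN"
    using dif ipL iL dp unfolding L_def by (simp_all add: nth_eq_iff_index_eq)
  moreover have "p ! ip \<le> M" "p ! iN \<le> M" unfolding M_def using ipL unfolding L_def by auto
  ultimately have "p ! ip < p ! i" "p ! iN < p ! i" using pi by auto
  moreover have "(p ! iN, p ! i) \<in> E" using e2 symE by (meson symD)
  ultimately have "p ! ip = par (p ! i)" "p ! iN = par (p ! i)"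
    using edge_up e1 by blast+
  then show False using \<open>p ! ip \<noteq> p ! iN\<close> by simp
qed

lemma zeroV: "0 \<in> V" using n4 unfolding V_iff by simp

lemma is_tree: "is_tree V E"
  unfolding is_tree_def using finV EV symE irrE connected no_cycle zeroV by blast


lemma nbr_leaf: "n \<le> v \<Longrightarrow> v < 2 * n \<Longrightarrow> {u. (v, u) \<in> E} = {par v}"
proof -
  assume a: "n \<le> v" "v < 2 * n"
  have vV: "v \<in> V" "v \<noteq> 0" using a n4 unfolding V_iff by auto
  have "u = par v" if "(v, u) \<in> E" for u
  proof -
    have "u \<in> V" using that E_iff by blast
    moreover have "(u \<noteq> 0 \<and> v = par u) \<longrightarrow> False" using par_lt[of u] \<open>u \<in> V\<close> a by auto
    ultimately show ?thesis using that E_iff vV by blast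
  qed
  then show ?thesis using edge_par[OF vV] by blast
qed

lemma att_iff: "i < n \<Longrightarrow> k \<le> n - 3 \<Longrightarrow> att n i = k \<longleftrightarrow>
   (k = 0 \<and> i \<le> 1) \<or> (0 < k \<and> k < n - 3 \<and> i = k + 1) \<or> (k = n - 3 \<and> n - 2 \<le> i)"
  using n4 unfolding att_def min_def by auto

lemma E_spine: "k < n - 2 \<Longrightarrow> (k, u) \<in> E \<longleftrightarrow>
   (k \<noteq> 0 \<and> u = k - 1) \<or> (u = k + 1 \<and> k + 1 < n - 2) \<or> (n \<le> u \<and> u < 2 * n \<and> att n (u - n) = k)"
proof -
  assume k: "k < n - 2"
  have kV: "k \<in> V" using k V_iff by blast
  have "(k, u) \<in> E \<longleftrightarrow> u \<in> V \<and> ((k \<noteq> 0 \<and> u = par k) \<or> (u \<noteq> 0 \<and> k = par u))"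
    using E_iff kV by blast
  also have "\<dots> \<longleftrightarrow> (k \<noteq> 0 \<and> u = k - 1) \<or> (u = k + 1 \<and> k + 1 < n - 2) \<or> (n \<le> u \<and> u < 2 * n \<and> att n (u - n) = k)"
  proof
    assume a: "u \<in> V \<and> ((k \<noteq> 0 \<and> u = par k) \<or> (u \<noteq> 0 \<and> k = par u))"
    show "(k \<noteq> 0 \<and> u = k - 1) \<or> (u = k + 1 \<and> k + 1 < n - 2) \<or> (n \<le> u \<and> u < 2 * n \<and> att n (u - n) = k)"
    proof (cases "k \<noteq> 0 \<and> u = par k")
      case True then show ?thesis using k par_spine[of k] n4 by simp
    next
      case False
      then have u0: "u \<noteq> 0" and ku: "k = par u" using a by auto
      have uV: "u < n - 2 \<or> (n \<le> u \<and> u < 2 * n)" using a V_iff by blast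
      show ?thesis
      proof (cases "u < n")
        case True then have "u < n - 2" using uV by linarith
        then show ?thesis using ku par_spine[of u] True u0 by simp
      next
        case False
        then have "n \<le> u" "u < 2 * n" using uV by linarith+
        then show ?thesis using ku par_leaf[of u] by simp
      qed
    qed
  next
    assume a: "(k \<noteq> 0 \<and> u = k - 1) \<or> (u = k + 1 \<and> k + 1 < n - 2) \<or> (n \<le> u \<and> u < 2 * n \<and> att n (u - n) = k)"
    then consider "k \<noteq> 0 \<and> u = k - 1" | "u = k + 1 \<and> k + 1 < n - 2" | "n \<le> u \<and> u < 2 * n \<and> att n (u - n) = k"
      by blast
    then show "u \<in> V \<and> ((k \<noteq> 0 \<and> u = par k) \<or> (u \<noteq> 0 \<and> k = par u))"
    proof cases
      case 1
      have "par k = k - 1" using par_spine[of k] k n4 by simp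
      moreover have "u \<in> V" unfolding V_iff using 1 k by linarith
      ultimately show ?thesis using 1 by simp
    next
      case 2
      have "u < n" using 2 by linarith
      then have "par u = k" using par_spine[of u] 2 by simp
      moreover have "u \<in> V" unfolding V_iff using 2 by linarith
      ultimately show ?thesis using 2 by auto
    next
      case 3
      have "par u = k" using par_leaf[of u] 3 by simp
      moreover have "u \<in> V" unfolding V_iff using 3 by linarith
      moreover have "u \<noteq> 0" using 3 n4 by simp
      ultimately show ?thesis by blast
    qed
  qed
  finally show ?thesis .
qed

lemma nbr_0: "{u. (0, u) \<in> E} = {1, n, n + 1}"
proof -
  have "(0, u) \<in> E \<longleftrightarrow> u = 1 \<or> u = n \<or> u = n + 1" for u
  proof -
    have "(0, u) \<in> E \<longleftrightarrow> (u = 1 \<and> 1 < n - 2) \<or> (n \<le> u \<and> u < 2 * n \<and> att n (u - n) = 0)"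
      using E_spine[of 0 u] n4 by simp
    also have "\<dots> \<longleftrightarrow> u = 1 \<or> u = n \<or> u = n + 1"
    proof -
      have "(n \<le> u \<and> u < 2 * n \<and> att n (u - n) = 0) \<longleftrightarrow> (n \<le> u \<and> u < 2 * n \<and> u - n \<le> 1)"
        using att_iff[of "u - n" 0] n4 by auto
      then show ?thesis using n4 by auto
    qed
    finally show ?thesis .
  qed
  then show ?thesis by auto
qed

lemma nbr_mid: "0 < k \<Longrightarrow> k < n - 3 \<Longrightarrow> {u. (k, u) \<in> E} = {k - 1, k + 1, n + k + 1}"
proof -
  assume k: "0 < k" "k < n - 3"
  have "(k, u) \<in> E \<longleftrightarrow> u = k - 1 \<or> u = k + 1 \<or> u = n + k + 1" for u
  proof -
    have "(k, u) \<in> E \<longleftrightarrow> u = k - 1 \<or> u = k + 1 \<or> (n \<le> u \<and> u < 2 * n \<and> att n (u - n) = k)"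
      using E_spine[of k u] k by auto
    also have "(n \<le> u \<and> u < 2 * n \<and> att n (u - n) = k) \<longleftrightarrow> u = n + k + 1"
    proof -
      have ai: "att n (u - n) = k \<longleftrightarrow> u - n = k + 1" if "u - n < n"
        using att_iff[of "u - n" k] k n4 that by auto
      show ?thesis
      proof
        assume a: "n \<le> u \<and> u < 2 * n \<and> att n (u - n) = k"
        then have "u - n < n" by linarith
        then have "u - n = k + 1" using ai a by blast
        then show "u = n + k + 1" using a by linarith
      next
        assume a: "u = n + k + 1"
        then have "u - n < n" "u - n = k + 1" using k by linarith+
        then show "n \<le> u \<and> u < 2 * n \<and> att n (u - n) = k" using ai a k by auto
      qed
    qed
    finally show ?thesis .
  qed
  then show ?thesis by auto
qed

lemma nbr_last: "{u. (n - 3, u) \<in> E} = {n - 4, 2 * n - 2, 2 * n - 1}"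
proof -
  have "(n - 3, u) \<in> E \<longleftrightarrow> u = n - 4 \<or> u = 2 * n - 2 \<or> u = 2 * n - 1" for u
  proof -
    have "(n - 3, u) \<in> E \<longleftrightarrow> u = n - 4 \<or> (n \<le> u \<and> u < 2 * n \<and> att n (u - n) = n - 3)"
      using E_spine[of "n - 3" u] n4 by auto
    also have "(n \<le> u \<and> u < 2 * n \<and> att n (u - n) = n - 3) \<longleftrightarrow> u = 2 * n - 2 \<or> u = 2 * n - 1"
    proof -
      have ai: "att n (u - n) = n - 3 \<longleftrightarrow> n - 2 \<le> u - n" if "u - n < n"
        using att_iff[of "u - n" "n - 3"] n4 that by auto
      show ?thesis
      proof
        assume a: "n \<le> u \<and> u < 2 * n \<and> att n (u - n) = n - 3"
        then have "u - n < n" by linarith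
        then have "n - 2 \<le> u - n" using ai a by blast
        then show "u = 2 * n - 2 \<or> u = 2 * n - 1" using a by linarith
      next
        assume a: "u = 2 * n - 2 \<or> u = 2 * n - 1"
        then have "u - n < n" "n - 2 \<le> u - n" "n \<le> u" "u < 2 * n" using n4 by auto
        then show "n \<le> u \<and> u < 2 * n \<and> att n (u - n) = n - 3" using ai by blast
      qed
    qed
    finally show ?thesis .
  qed
  then show ?thesis by auto
qed

lemma deg_spine: "k < n - 2 \<Longrightarrow> degree E k = 3"
proof -
  assume k: "k < n - 2"
  consider "k = 0" | "0 < k \<and> k < n - 3" | "k = n - 3" using k by linarith
  then show ?thesis
  proof cases
    case 1 then show ?thesis unfolding degree_def using nbr_0 n4 by simp
  next
    case 2
    have "card {k - 1, k + 1, n + k + 1} = 3" using 2 n4 by (auto simp: card_insert_if)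
    then show ?thesis unfolding degree_def using nbr_mid[of k] 2 by simp
  next
    case 3
    have "card {n - 4, 2 * n - 2, 2 * n - 1} = 3" using n4 by (auto simp: card_insert_if)
    then show ?thesis unfolding degree_def using nbr_last 3 by simp
  qed
qed

lemma deg_leaf: "n \<le> v \<Longrightarrow> v < 2 * n \<Longrightarrow> degree E v = 1"
  unfolding degree_def using nbr_leaf by simp

lemma leaves_eq: "leaves V E = {n..<2 * n}"
  unfolding leaves_def using deg_spine deg_leaf unfolding V_iff by force

lemma interior_eq: "interior_vertices V E = {..<n - 2}"
  unfolding interior_vertices_def leaves_eq unfolding cV_def using n4 by auto


lemma cherries_sub: "cherries V E \<subseteq> {{n, n + 1}, {2 * n - 2, 2 * n - 1}}"
proof
  fix c assume "c \<in> cherries V E"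
  then obtain a b w where c: "c = {a, b}" and a: "a \<in> leaves V E" and b: "b \<in> leaves V E" and ab: "a \<noteq> b"
    and aw: "(a, w) \<in> E" and bw: "(b, w) \<in> E"
    unfolding cherries_def by blast
  have a1: "n \<le> a" "a < 2 * n" and b1: "n \<le> b" "b < 2 * n" using a b leaves_eq by auto
  have "w = par a" using nbr_leaf[OF a1] aw by blast
  then have wa: "att n (a - n) = w" using par_leaf[OF a1(1)] by simp
  have "w = par b" using nbr_leaf[OF b1] bw by blast
  then have wb: "att n (b - n) = w" using par_leaf[OF b1(1)] by simp
  have wle: "w \<le> n - 3" using wa att_le by metis
  have ia: "a - n < n" and ib: "b - n < n" using a1 b1 by linarith+
  have A: "(w = 0 \<and> a - n \<le> 1) \<or> (0 < w \<and> w < n - 3 \<and> a - n = w + 1) \<or> (w = n - 3 \<and> n - 2 \<le> a - n)"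
    using att_iff[OF ia wle] wa by blast
  have B: "(w = 0 \<and> b - n \<le> 1) \<or> (0 < w \<and> w < n - 3 \<and> b - n = w + 1) \<or> (w = n - 3 \<and> n - 2 \<le> b - n)"
    using att_iff[OF ib wle] wb by blast
  have "(a = n \<and> b = n + 1) \<or> (a = n + 1 \<and> b = n) \<or> (a = 2 * n - 2 \<and> b = 2 * n - 1) \<or> (a = 2 * n - 1 \<and> b = 2 * n - 2)"
  proof -
    have "(a - n \<le> 1 \<and> b - n \<le> 1) \<or> (n - 2 \<le> a - n \<and> n - 2 \<le> b - n)"
    proof -
      consider "w = 0" | "0 < w \<and> w < n - 3" | "w = n - 3" using wle by linarith
      then show ?thesis
      proof cases
        case 1 then show ?thesis using A B n4 by auto
      next
        case 2 then have "a - n = w + 1" "b - n = w + 1" using A B by auto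
        then show ?thesis using ab a1 b1 by simp
      next
        case 3 then show ?thesis using A B n4 by auto
      qed
    qed
    then show ?thesis
    proof
      assume "a - n \<le> 1 \<and> b - n \<le> 1"
      then have "a = n \<or> a = n + 1" "b = n \<or> b = n + 1" using a1 b1 by auto
      then show ?thesis using ab by auto
    next
      assume "n - 2 \<le> a - n \<and> n - 2 \<le> b - n"
      then have "a = 2 * n - 2 \<or> a = 2 * n - 1" "b = 2 * n - 2 \<or> b = 2 * n - 1" using a1 b1 by auto
      then show ?thesis using ab by auto
    qed
  qed
  then show "c \<in> {{n, n + 1}, {2 * n - 2, 2 * n - 1}}" using c by auto
qed

lemma card_cherries: "card (cherries V E) \<le> 2"
proof -
  have "card (cherries V E) \<le> card {{n, n + 1}, {2 * n - 2, 2 * n - 1}}"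
    using card_mono[OF _ cherries_sub] by simp
  also have "\<dots> \<le> 2" by (simp add: card_insert_if)
  finally show ?thesis .
qed

definition pos :: "nat \<Rightarrow> nat" where "pos v = (if v < n then v else att n (v - n))"

lemma pos_spine: "v < n \<Longrightarrow> pos v = v" unfolding pos_def by simp
lemma pos_leaf: "n \<le> v \<Longrightarrow> pos v = att n (v - n)" unfolding pos_def by simp

lemma closed_right:
  assumes "(u, v) \<in> E" "w < pos u" "u \<noteq> w" "v \<noteq> w"
  shows "w < pos v"
proof -
  have uV: "u < n - 2 \<or> (n \<le> u \<and> u < 2 * n)" and vV: "v < n - 2 \<or> (n \<le> v \<and> v < 2 * n)"
    using assms(1) E_iff V_iff by blast+
  have "(u \<noteq> 0 \<and> v = par u) \<or> (v \<noteq> 0 \<and> u = par v)" using assms(1) E_iff by blast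
  then show ?thesis
  proof
    assume a: "u \<noteq> 0 \<and> v = par u"
    show ?thesis
    proof (cases "u < n")
      case True
      then have "v = u - 1" "pos u = u" using a par_spine pos_spine by auto
      moreover have "v < n" using \<open>v = u - 1\<close> True by linarith
      ultimately show ?thesis using assms(2,4) pos_spine by auto
    next
      case False
      then have "v = att n (u - n)" "pos u = att n (u - n)" using a par_leaf pos_leaf by auto
      moreover have "v < n" using \<open>v = att n (u - n)\<close> att_le[of "u - n"] n4 by linarith
      ultimately show ?thesis using assms(2) pos_spine by auto
    qed
  next
    assume a: "v \<noteq> 0 \<and> u = par v"
    have ulow: "u < n - 2" using par_lt[of v] a vV V_iff by auto
    then have pu: "pos u = u" using pos_spine by simp
    show ?thesis
    proof (cases "v < n")
      case True
      then have "u = v - 1" using a par_spine by auto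
      then show ?thesis using assms(2) pu True pos_spine a by auto
    next
      case False
      then have "pos v = u" using a par_leaf pos_leaf by auto
      then show ?thesis using assms(2) pu by simp
    qed
  qed
qed

lemma closed_left:
  assumes "(u, v) \<in> E" "pos u < w" "u \<noteq> w" "v \<noteq> w"
  shows "pos v < w"
proof -
  have vV: "v < n - 2 \<or> (n \<le> v \<and> v < 2 * n)"
    using assms(1) E_iff V_iff by blast+
  have "(u \<noteq> 0 \<and> v = par u) \<or> (v \<noteq> 0 \<and> u = par v)" using assms(1) E_iff by blast
  then show ?thesis
  proof
    assume a: "u \<noteq> 0 \<and> v = par u"
    show ?thesis
    proof (cases "u < n")
      case True
      then have "v = u - 1" "pos u = u" using a par_spine pos_spine by auto
      moreover have "v < n" using \<open>v = u - 1\<close> True by linarith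
      ultimately show ?thesis using assms(2) pos_spine by auto
    next
      case False
      then have "v = att n (u - n)" "pos u = att n (u - n)" using a par_leaf pos_leaf by auto
      moreover have "v < n" using \<open>v = att n (u - n)\<close> att_le[of "u - n"] n4 by linarith
      ultimately show ?thesis using assms(2) pos_spine by auto
    qed
  next
    assume a: "v \<noteq> 0 \<and> u = par v"
    have ulow: "u < n - 2" using par_lt[of v] a vV V_iff by auto
    then have pu: "pos u = u" using pos_spine by simp
    show ?thesis
    proof (cases "v < n")
      case True
      then have "u = v - 1" using a par_spine by auto
      then show ?thesis using assms(2,4) pu True pos_spine a by auto
    next
      case False
      then have "pos v = u" using a par_leaf pos_leaf by auto
      then show ?thesis using assms(2) pu by simp
    qed
  qed
qed

lemma spine_nbr: "w < n - 2 \<Longrightarrow> (w, u) \<in> E \<Longrightarrow> (w \<noteq> 0 \<and> u = w - 1 \<and> pos u = w - 1) \<or> (u = w + 1 \<and> pos u = w + 1) \<or> pos u = w"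
proof -
  assume w: "w < n - 2" and e: "(w, u) \<in> E"
  have "(w \<noteq> 0 \<and> u = w - 1) \<or> (u = w + 1 \<and> w + 1 < n - 2) \<or> (n \<le> u \<and> u < 2 * n \<and> att n (u - n) = w)"
    using E_spine[OF w] e by blast
  then show ?thesis
  proof (elim disjE)
    assume a: "w \<noteq> 0 \<and> u = w - 1"
    then have "u < n" using w by linarith
    then show ?thesis using a pos_spine by simp
  next
    assume a: "u = w + 1 \<and> w + 1 < n - 2"
    then have "u < n" by linarith
    then show ?thesis using a pos_spine by simp
  next
    assume a: "n \<le> u \<and> u < 2 * n \<and> att n (u - n) = w"
    then show ?thesis using pos_leaf by simp
  qed
qed

lemma leaf_on_path:
  assumes "n \<le> w" "w < 2 * n" "on_path E x w y" "x \<in> V" "y \<in> V"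
  shows "w = x \<or> w = y"
proof (rule ccontr)
  assume ne: "\<not> (w = x \<or> w = y)"
  obtain p where gp: "gpath E x y p" and wp: "w \<in> set p" using assms(3) unfolding on_path_def by blast
  show False
  proof (rule gpath_avoid[OF symE gp wp, of "V - {w}"])
    show "w \<noteq> x" "w \<noteq> y" using ne by auto
    show "x \<in> V - {w}" "y \<in> V - {w}" using ne assms(4,5) by auto
    show "\<And>u v. (u, v) \<in> E \<Longrightarrow> u \<in> V - {w} \<Longrightarrow> v \<noteq> w \<Longrightarrow> v \<in> V - {w}"
      using E_iff by blast
    show "\<And>u v. (w, u) \<in> E \<Longrightarrow> (w, v) \<in> E \<Longrightarrow> u \<in> V - {w} \<Longrightarrow> v \<in> V - {w} \<Longrightarrow> u = v"
    proof -
      have h: "(w, u) \<in> E \<Longrightarrow> u = par w" for u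
        using nbr_leaf[OF assms(1,2)] by (metis mem_Collect_eq singletonD)
      fix u v assume "(w, u) \<in> E" "(w, v) \<in> E"
      then show "u = v" using h by metis
    qed
  qed
qed

lemma spine_right:
  assumes "w < n - 2" "on_path E x w y" "x \<noteq> w" "y \<noteq> w" "w < pos x" "w < pos y" "x \<in> V" "y \<in> V"
  shows False
proof -
  obtain p where gp: "gpath E x y p" and wp: "w \<in> set p" using assms(2) unfolding on_path_def by blast
  show False
  proof (rule gpath_avoid[OF symE gp wp, of "{v. v \<noteq> w \<and> w < pos v}"])
    show "w \<noteq> x" "w \<noteq> y" using assms by auto
    show "x \<in> {v. v \<noteq> w \<and> w < pos v}" "y \<in> {v. v \<noteq> w \<and> w < pos v}" using assms by auto
    show "\<And>u v. (u, v) \<in> E \<Longrightarrow> u \<in> {v. v \<noteq> w \<and> w < pos v} \<Longrightarrow> v \<noteq> w \<Longrightarrow> v \<in> {v. v \<noteq> w \<and> w < pos v}"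
      using closed_right by blast
    show "\<And>u v. (w, u) \<in> E \<Longrightarrow> (w, v) \<in> E \<Longrightarrow> u \<in> {v. v \<noteq> w \<and> w < pos v} \<Longrightarrow> v \<in> {v. v \<noteq> w \<and> w < pos v} \<Longrightarrow> u = v"
    proof -
      fix u v assume "(w, u) \<in> E" "(w, v) \<in> E" "u \<in> {v. v \<noteq> w \<and> w < pos v}" "v \<in> {v. v \<noteq> w \<and> w < pos v}"
      then have "u = w + 1" "v = w + 1" using spine_nbr[OF assms(1)] by fastforce+
      then show "u = v" by simp
    qed
  qed
qed

lemma spine_left:
  assumes "w < n - 2" "on_path E x w y" "x \<noteq> w" "y \<noteq> w" "pos x < w" "pos y < w" "x \<in> V" "y \<in> V"
  shows False
proof -
  obtain p where gp: "gpath E x y p" and wp: "w \<in> set p" using assms(2) unfolding on_path_def by blast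
  show False
  proof (rule gpath_avoid[OF symE gp wp, of "{v. v \<noteq> w \<and> pos v < w}"])
    show "w \<noteq> x" "w \<noteq> y" using assms by auto
    show "x \<in> {v. v \<noteq> w \<and> pos v < w}" "y \<in> {v. v \<noteq> w \<and> pos v < w}" using assms by auto
    show "\<And>u v. (u, v) \<in> E \<Longrightarrow> u \<in> {v. v \<noteq> w \<and> pos v < w} \<Longrightarrow> v \<noteq> w \<Longrightarrow> v \<in> {v. v \<noteq> w \<and> pos v < w}"
      using closed_left by blast
    show "\<And>u v. (w, u) \<in> E \<Longrightarrow> (w, v) \<in> E \<Longrightarrow> u \<in> {v. v \<noteq> w \<and> pos v < w} \<Longrightarrow> v \<in> {v. v \<noteq> w \<and> pos v < w} \<Longrightarrow> u = v"
    proof -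
      fix u v assume "(w, u) \<in> E" "(w, v) \<in> E" "u \<in> {v. v \<noteq> w \<and> pos v < w}" "v \<in> {v. v \<noteq> w \<and> pos v < w}"
      then have "u = w - 1" "v = w - 1" using spine_nbr[OF assms(1)] by fastforce+
      then show "u = v" by simp
    qed
  qed
qed


lemma on_path_cut:
  assumes "u \<in> V" "v \<in> V" "u \<in> S" "v \<notin> S"
    and cut: "\<And>x y. (x, y) \<in> E \<Longrightarrow> x \<in> S \<Longrightarrow> y \<notin> S \<Longrightarrow> x = z \<or> y = z"
  shows "on_path E u z v"
proof -
  obtain p where gp: "gpath E u v p" using connected[OF assms(1,2)] by blast
  then have "walk E p" "hd p = u" "last p = v" unfolding gpath_def by auto
  then have "z \<in> set p" using walk_cut[of E p S z] assms(3,4) cut by blast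
  then show ?thesis using gp unfolding on_path_def by blast
qed

lemma med_char:
  assumes ij: "i < j" and jk: "j < k" and kn: "k < n" and wV: "w \<in> V"
  shows "(\<forall>u\<in>{n + i, n + j, n + k}. \<forall>v\<in>{n + i, n + j, n + k}. u \<noteq> v \<longrightarrow> on_path E u w v)
         \<longleftrightarrow> w = j - 1"
proof -
  define A where "A = n + i"
  define B where "B = n + j"
  define C where "C = n + k"
  have AV: "A \<in> V" and BV: "B \<in> V" and CV: "C \<in> V" unfolding A_def B_def C_def V_iff using assms by auto
  have dist: "A \<noteq> B" "B \<noteq> C" "A \<noteq> C" unfolding A_def B_def C_def using assms by auto
  have j1: "1 \<le> j" "j \<le> n - 2" using assms by auto
  have attj: "att n j = j - 1" unfolding att_def using j1 by simp
  have parB: "par B = j - 1" unfolding B_def using par_leaf[of "n + j"] attj by simp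
  have posA: "pos A \<le> j - 1" unfolding A_def using pos_leaf[of "n + i"] ij unfolding att_def by simp
  have posB: "pos B = j - 1" unfolding B_def using pos_leaf[of "n + j"] attj by simp
  have posC: "j - 1 \<le> pos C"
  proof -
    have "j - 1 \<le> k - 1" "j - 1 \<le> n - 3" using jk j1 by linarith+
    then show ?thesis unfolding C_def using pos_leaf[of "n + k"] unfolding att_def by simp
  qed
  have nbB: "(B, x) \<in> E \<longleftrightarrow> x = j - 1" for x
    using nbr_leaf[of B] parB unfolding B_def using kn jk by (auto simp: set_eq_iff)
  show ?thesis
  proof
    assume H: "\<forall>u\<in>{n + i, n + j, n + k}. \<forall>v\<in>{n + i, n + j, n + k}. u \<noteq> v \<longrightarrow> on_path E u w v"
    have H': "on_path E u w v" if "u \<in> {A, B, C}" "v \<in> {A, B, C}" "u \<noteq> v" for u v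
      using H that unfolding A_def B_def C_def by blast
    have pAB: "on_path E A w B" by (rule H') (simp_all add: dist)
    have pBC: "on_path E B w C" by (rule H') (simp_all add: dist)
    have pAC: "on_path E A w C" by (rule H') (simp_all add: dist)
    show "w = j - 1"
    proof (cases "n \<le> w")
      case True
      have w2: "w < 2 * n" using wV True unfolding V_iff by linarith
      have "w = A \<or> w = B" using leaf_on_path[OF True w2 pAB AV BV] .
      moreover have "w = B \<or> w = C" using leaf_on_path[OF True w2 pBC BV CV] .
      moreover have "w = A \<or> w = C" using leaf_on_path[OF True w2 pAC AV CV] .
      ultimately show ?thesis using dist by auto
    next
      case False
      have wl: "w < n - 2" using wV False unfolding V_iff by linarith
      have wB: "B \<noteq> w" "A \<noteq> w" "C \<noteq> w" using False unfolding A_def B_def C_def by auto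
      show ?thesis
      proof (rule ccontr)
        assume ne: "w \<noteq> j - 1"
        show False
        proof (cases "w < j - 1")
          case True
          show False by (rule spine_right[OF wl pBC wB(1) wB(3)]) (use True posB posC BV CV in auto)
        next
          case False
          then have "j - 1 < w" using ne by linarith
          then show False by (intro spine_left[OF wl pAB wB(2) wB(1)]) (use posA posB AV BV in auto)
        qed
      qed
    qed
  next
    assume w: "w = j - 1"
    have pAB: "on_path E A w B"
    proof (rule on_path_cut[OF AV BV, of "V - {B}"])
      show "A \<in> V - {B}" "B \<notin> V - {B}" using AV dist by auto
      fix x y assume "(x, y) \<in> E" "x \<in> V - {B}" "y \<notin> V - {B}"
      then have "y = B" "(y, x) \<in> E" using E_iff symE by (auto dest: symD)
      then show "x = w \<or> y = w" using nbB w by auto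
    qed
    have pBC: "on_path E B w C"
    proof (rule on_path_cut[OF BV CV, of "{B}"])
      show "B \<in> {B}" "C \<notin> {B}" using dist by auto
      fix x y assume "(x, y) \<in> E" "x \<in> {B}" "y \<notin> {B}"
      then show "x = w \<or> y = w" using nbB w by auto
    qed
    define S where "S = {v. v < j - 1} \<union> {v. n \<le> v \<and> v < n + j}"
    have pAC: "on_path E A w C"
    proof (rule on_path_cut[OF AV CV, of S])
      show "A \<in> S" "C \<notin> S" unfolding S_def A_def C_def using assms by auto
      fix x y assume e: "(x, y) \<in> E" and xS: "x \<in> S" and yS: "y \<notin> S"
      have xV: "x \<in> V" and yV: "y \<in> V" using e E_iff by auto
      have "(x \<noteq> 0 \<and> y = par x) \<or> (y \<noteq> 0 \<and> x = par y)" using e E_iff by blast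
      then show "x = w \<or> y = w"
      proof
        assume a: "x \<noteq> 0 \<and> y = par x"
        show ?thesis
        proof (cases "x < n")
          case True
          then have "x < j - 1" using xS unfolding S_def by auto
          moreover have "y = x - 1" using a True par_spine by simp
          ultimately have "y \<in> S" unfolding S_def by auto
          then show ?thesis using yS by blast
        next
          case False
          then have x1: "n \<le> x" "x < n + j" using xS unfolding S_def by auto
          have "y = att n (x - n)" using a False par_leaf by simp
          then have "y \<le> j - 1" "y < n" using x1 att_le[of "x - n"] n4 unfolding att_def by auto
          moreover have "\<not> y < j - 1" using yS \<open>y < n\<close> unfolding S_def by auto
          ultimately show ?thesis using w by linarith
        qed
      next
        assume a: "y \<noteq> 0 \<and> x = par y"
        show ?thesis
        proof (cases "y < n")
          case True
          then have "x = y - 1" using a par_spine by simp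
          then have "x < n" using True by linarith
          then have "x < j - 1" using xS unfolding S_def by auto
          moreover have "\<not> y < j - 1" using yS True unfolding S_def by auto
          ultimately show ?thesis using w \<open>x = y - 1\<close> a by linarith
        next
          case False
          then have y1: "n + j \<le> y" "y < 2 * n" using yS yV unfolding S_def V_iff by auto
          have "x = att n (y - n)" using a False par_leaf by simp
          then have "j - 1 \<le> x" "x < n" using y1 j1 att_le[of "y - n"] n4 unfolding att_def by auto
          moreover have "x < j - 1" using xS \<open>x < n\<close> unfolding S_def by auto
          ultimately show ?thesis by linarith
        qed
      qed
    qed
    have "on_path E B w A" "on_path E C w B" "on_path E C w A"
      using pAB pBC pAC on_path_sym[OF symE] by blast+
    then show "\<forall>u\<in>{n + i, n + j, n + k}. \<forall>v\<in>{n + i, n + j, n + k}. u \<noteq> v \<longrightarrow> on_path E u w v"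
      using pAB pBC pAC unfolding A_def B_def C_def by auto
  qed
qed


end


lemma forall_pairs_inj:
  "inj_on f s \<Longrightarrow> (\<forall>a\<in>s. \<forall>b\<in>s. a \<noteq> b \<longrightarrow> P (f a) (f b)) \<longleftrightarrow> (\<forall>u\<in>f ` s. \<forall>v\<in>f ` s. u \<noteq> v \<longrightarrow> P u v)"
  unfolding inj_on_def by (auto simp: image_iff)

lemma three_order:
  fixes r :: "'a \<Rightarrow> nat"
  assumes "card s = 3" "inj_on r s"
  shows "\<exists>p m q. s = {p, m, q} \<and> r p < r m \<and> r m < r q"
proof -
  obtain a b c where s: "s = {a, b, c}" and d: "a \<noteq> b" "b \<noteq> c" "a \<noteq> c"
    using assms(1) unfolding card_3_iff by blast
  have "r a \<noteq> r b" "r b \<noteq> r c" "r a \<noteq> r c" using assms(2) d unfolding s inj_on_def by auto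
  then consider "r a < r b \<and> r b < r c" | "r a < r c \<and> r c < r b" | "r b < r a \<and> r a < r c"
    | "r b < r c \<and> r c < r a" | "r c < r a \<and> r a < r b" | "r c < r b \<and> r b < r a" by linarith
  then show ?thesis
  proof cases
    case 1 then show ?thesis using s by blast
  next
    case 2 then show ?thesis using s by (intro exI[of _ a] exI[of _ c] exI[of _ b]) auto
  next
    case 3 then show ?thesis using s by (intro exI[of _ b] exI[of _ a] exI[of _ c]) auto
  next
    case 4 then show ?thesis using s by (intro exI[of _ b] exI[of _ c] exI[of _ a]) auto
  next
    case 5 then show ?thesis using s by (intro exI[of _ c] exI[of _ a] exI[of _ b]) auto
  next
    case 6 then show ?thesis using s by (intro exI[of _ c] exI[of _ b] exI[of _ a]) auto
  qed
qed

theorem theorem2: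
  fixes X :: "'a set" and \<tau> :: "'a set set"
  assumes "finite X" and "card X \<ge> 4"
    and "\<tau> \<subseteq> {s. s \<subseteq> X \<and> card s = 3}"
    and "\<tau> \<noteq> {}" and "thin \<tau>"
  shows "\<exists>(V :: nat set) E phi. caterpillar X V E phi
           \<and> (\<forall>s\<in>\<tau>. med V E phi s \<in> interior_vertices V E)
           \<and> inj_on (med V E phi) \<tau>"
proof -
  define n where "n = card X"
  have n4: "4 \<le> n" using assms(2) unfolding n_def .
  interpret cat n by unfold_locales (rule n4)
  have "X \<noteq> {}" using n4 unfolding n_def by auto
  then obtain y0 where y0: "y0 \<in> X" by blast
  obtain r where rimg: "r ` X = {..<n}" and rinj: "inj_on r X"
    and valid: "\<forall>s1\<in>\<tau>. \<forall>s2\<in>\<tau>. \<forall>m. midp r s1 m \<longrightarrow> midp r s2 m \<longrightarrow> s1 = s2"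
    using order_exists[OF assms(1) assms(3) assms(5) y0] unfolding n_def by blast
  define phi where "phi x = n + r x" for x
  have phi_inj: "inj_on phi X" using rinj unfolding phi_def inj_on_def by auto
  have phi_img: "phi ` X = {n..<2 * n}"
  proof -
    have "phi ` X = (\<lambda>k. n + k) ` (r ` X)" unfolding phi_def by (simp add: image_image)
    also have "\<dots> = (\<lambda>k. n + k) ` {..<n}" using rimg by simp
    also have "\<dots> = {n..<2 * n}"
    proof
      show "(\<lambda>k. n + k) ` {..<n} \<subseteq> {n..<2 * n}" by auto
      show "{n..<2 * n} \<subseteq> (\<lambda>k. n + k) ` {..<n}"
      proof
        fix v assume "v \<in> {n..<2 * n}"
        then have "v = n + (v - n)" "v - n < n" by auto
        then show "v \<in> (\<lambda>k. n + k) ` {..<n}" by blast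
      qed
    qed
    finally show ?thesis .
  qed
  have cat: "caterpillar X V E phi"
    unfolding caterpillar_def binary_phylo_tree_def phylo_tree_def
    using is_tree card_cherries phi_inj phi_img deg_spine
    unfolding leaves_eq interior_eq bij_betw_def by auto
  have medc: "med V E phi s = r m - 1 \<and> 1 \<le> r m \<and> r m < n - 1" if sT: "s \<in> \<tau>" and sp: "s = {p, m, q}"
    and o: "r p < r m" "r m < r q" for s p m q
  proof -
    have sX: "s \<subseteq> X" using sT assms(3) by blast
    have qn: "r q < n" using rimg sX sp by blast
    have inj_s: "inj_on phi s" using phi_inj sX inj_on_subset by blast
    have img: "phi ` s = {n + r p, n + r m, n + r q}" unfolding phi_def sp by simp
    have P: "(w \<in> V \<and> (\<forall>a\<in>s. \<forall>b\<in>s. a \<noteq> b \<longrightarrow> on_path E (phi a) w (phi b))) \<longleftrightarrow> w = r m - 1" for w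
    proof
      assume a: "w \<in> V \<and> (\<forall>a\<in>s. \<forall>b\<in>s. a \<noteq> b \<longrightarrow> on_path E (phi a) w (phi b))"
      then have "\<forall>u\<in>phi ` s. \<forall>v\<in>phi ` s. u \<noteq> v \<longrightarrow> on_path E u w v"
        using forall_pairs_inj[OF inj_s, of "\<lambda>u v. on_path E u w v"] by blast
      then show "w = r m - 1" using med_char[OF o qn] a unfolding img by blast
    next
      assume w: "w = r m - 1"
      have wV: "w \<in> V" unfolding V_iff w using o qn by linarith
      then have "\<forall>u\<in>phi ` s. \<forall>v\<in>phi ` s. u \<noteq> v \<longrightarrow> on_path E u w v"
        using med_char[OF o qn wV] w unfolding img by blast
      then show "w \<in> V \<and> (\<forall>a\<in>s. \<forall>b\<in>s. a \<noteq> b \<longrightarrow> on_path E (phi a) w (phi b))"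
        using forall_pairs_inj[OF inj_s, of "\<lambda>u v. on_path E u w v"] wV by blast
    qed
    have "med V E phi s = r m - 1" unfolding med_def using P by simp
    then show ?thesis using o qn by linarith
  qed
  have exm: "\<exists>m. midp r s m \<and> med V E phi s = r m - 1 \<and> 1 \<le> r m \<and> r m < n - 1" if sT: "s \<in> \<tau>" for s
  proof -
    have sX: "s \<subseteq> X" and c3: "card s = 3" using sT assms(3) by auto
    obtain p m q where sp: "s = {p, m, q}" and o: "r p < r m" "r m < r q"
      using three_order[OF c3 inj_on_subset[OF rinj sX]] by blast
    have "midp r s m" unfolding midp_def using sp o by blast
    then show ?thesis using medc[OF sT sp o] by blast
  qed
  have inter: "\<forall>s\<in>\<tau>. med V E phi s \<in> interior_vertices V E"
  proof
    fix s assume "s \<in> \<tau>"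
    then obtain m where "med V E phi s = r m - 1" "1 \<le> r m" "r m < n - 1" using exm by blast
    then show "med V E phi s \<in> interior_vertices V E" unfolding interior_eq by simp
  qed
  have injm: "inj_on (med V E phi) \<tau>"
  proof (rule inj_onI)
    fix s1 s2 assume s1: "s1 \<in> \<tau>" and s2: "s2 \<in> \<tau>" and eq: "med V E phi s1 = med V E phi s2"
    obtain m1 where m1: "midp r s1 m1" "med V E phi s1 = r m1 - 1" "1 \<le> r m1" using exm[OF s1] by blast
    obtain m2 where m2: "midp r s2 m2" "med V E phi s2 = r m2 - 1" "1 \<le> r m2" using exm[OF s2] by blast
    have "r m1 = r m2" using eq m1 m2 by linarith
    moreover have "m1 \<in> X" "m2 \<in> X" using m1 m2 s1 s2 assms(3) unfolding midp_def by blast+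
    ultimately have "m1 = m2" using rinj inj_onD by metis
    then show "s1 = s2" using valid s1 s2 m1 m2 by blast
  qed
  show ?thesis using cat inter injm by blast
qed


end
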